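(* Let $(w^*,\lambda^* )$ with $w^*\in[0,1]^n$, $\lambda^*\in\mathbb{R}^{d-1}$ be an optimal solution of the program defining $V$ (so $X^T(w^*\star(\tilde X\lambda^*-y))=0$ and $\|w^*\|_1=V$). Let $R^*$ be the region containing $\lambda^*$, and suppose that for every $\lambda\in R^*$ the number of $i\in[n]\setminus(B^*_M\cup B^*_{\delta M})$ with $\left|\frac{|r_i(\lambda)|}{|r_i(\lambda^* )|}-1\right|>\epsilon$ is at most $\epsilon n$, where $B^*_M=\{i:|r_i(\lambda^* )|>M\}$ and $B^*_{\delta M}=\{i:|r_i(\lambda^* )|\le\delta M/\sqrt n\}$. Then either $\max_R|B_{\delta M}(R)|>\epsilon n$, or $$V-12\epsilon n-1\le\max_R\hat V(R)\le V,$$ where the maxima are over all regions $R$.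
   Context: Samples $(X_i,y_i)_{i=1}^n$, $X_i\in\mathbb{R}^d$, $y_i\in\mathbb{R}$; $X$ is the $n\times d$ matrix with rows $X_i$; $\tilde X$ is the $n\times(d-1)$ matrix of columns $2,\dots,d$ of $X$ with rows $\tilde X_i$; $r_i(\lambda)=\langle\tilde X_i,\lambda\rangle-y_i$; $\star$ is the entrywise product. $V:=\sup\{\|w\|_1: w\in[0,1]^n,\lambda\in\mathbb{R}^{d-1}, X^T(w\star(\tilde X\lambda-y))=0\}$ (so $V=n$ minus the finite-sample stability). $M=\|X\beta^{(0)}-y\|_2$ with $\beta^{(0)}$ any minimizer of $\|X\beta-y\|_2^2$. Fix $\epsilon,\delta>0$ and $S\subseteq[n]$. Let $\mathcal E$ be the equations: $r_i(\lambda)=0$ ($i\in[n]$); $r_i(\lambda)=\pm M$ ($i\in[n]$); $r_i(\lambda)=\pm\delta M/\sqrt n$ ($i\in[n]$); $r_i(\lambda)=\pm(1+\epsilon)^k\delta M/\sqrt n$ ($i\in S$, $0\le k\le\lceil\log_{1+\epsilon}(\sqrt n/\delta)\rceil$). Regions: for each satisfiable assignment of the equations of $\mathcal E$ to $\{=,<,>\}$, the set of $\lambda$ satisfying them with strict inequalities made non-strict. For each region $R$ fix a representative $\lambda_0(R)\in R$ and a sign vector $\sigma\in\{-1,1\}^n$ such that $\sigma_i=1$ implies $r_i(\lambda)\ge0$ for all $\lambda\in R$ and $\sigma_i=-1$ implies $r_i(\lambda)\le 0$ for all $\lambda\in R$. Let $B_M(R)=\{i:|r_i(\lambda_0(R))|>M\}$,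 $B_{\delta M}(R)=\{i:|r_i(\lambda_0(R))|<\delta M/\sqrt n\}$. Let $(\hat g(R),\hat\lambda(R))$ be any maximizer over $g\in\mathbb{R}^n$, $\lambda\in R$ of $\sum_{i\in[n]\setminus(B_M(R)\cup B_{\delta M}(R))}\min\!\left(\frac{g_i}{r_i(\lambda_0(R))},1\right)$ subject to $X^Tg=0$, $0\le g_i\le r_i(\lambda)$ for $\sigma_i=1$, and $r_i(\lambda)\le g_i\le0$ for $\sigma_i=-1$. Define $\hat V(R)=\sum_{i\in[n]}\frac{\hat g(R)_i}{r_i(\hat\lambda(R))}$ with the convention $0/0=1$. If several regions contain $\lambda^*$, $R^*$ is any one of them. *)

theory Defs
  imports Complex_Main
begin

text \<open>Conventions: samples are indexed by i < n (0-based), columns of X by j < d.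
  The reduced matrix (columns 2..d of X) has entries X i (Suc j), j < d - 1.
  Vectors lambda in R^(d-1) are functions nat => real vanishing from index d - 1 on.\<close>

definition vecs :: "nat \<Rightarrow> (nat \<Rightarrow> real) set" where
  "vecs k = {v. \<forall>j\<ge>k. v j = 0}"

definition resid :: "(nat \<Rightarrow> nat \<Rightarrow> real) \<Rightarrow> (nat \<Rightarrow> real) \<Rightarrow> nat \<Rightarrow> (nat \<Rightarrow> real) \<Rightarrow> nat \<Rightarrow> real" where
  "resid X y d lam i = (\<Sum>j<d - 1. X i (Suc j) * lam j) - y i"

definition feasV :: "(nat \<Rightarrow> nat \<Rightarrow> real) \<Rightarrow> (nat \<Rightarrow> real) \<Rightarrow> nat \<Rightarrow> nat \<Rightarrow> (nat \<Rightarrow> real) \<Rightarrow> (nat \<Rightarrow> real) \<Rightarrow> bool" where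
  "feasV X y n d w lam \<longleftrightarrow> (\<forall>i<n. 0 \<le> w i \<and> w i \<le> 1) \<and> lam \<in> vecs (d - 1) \<and>
     (\<forall>j<d. (\<Sum>i<n. X i j * (w i * resid X y d lam i)) = 0)"

definition Vval :: "(nat \<Rightarrow> nat \<Rightarrow> real) \<Rightarrow> (nat \<Rightarrow> real) \<Rightarrow> nat \<Rightarrow> nat \<Rightarrow> real" where
  "Vval X y n d = Sup {(\<Sum>i<n. \<bar>w i\<bar>) | w lam. feasV X y n d w lam}"

text \<open>The equations of E, each "r_i(lambda) = c" encoded as the pair (i, c).\<close>
definition eqns :: "nat \<Rightarrow> real \<Rightarrow> real \<Rightarrow> real \<Rightarrow> nat set \<Rightarrow> (nat \<times> real) set" where
  "eqns n M eps delta S =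
     {(i, c). i < n \<and> (c = 0 \<or> c = M \<or> c = - M \<or> c = delta * M / sqrt n \<or> c = - (delta * M / sqrt n))}
   \<union> {(i, c). i \<in> S \<and> (\<exists>k::nat. int k \<le> \<lceil>log (1 + eps) (sqrt n / delta)\<rceil> \<and>
        (c = (1 + eps) ^ k * delta * M / sqrt n \<or> c = - ((1 + eps) ^ k * delta * M / sqrt n)))}"

definition satisfiable :: "(nat \<Rightarrow> nat \<Rightarrow> real) \<Rightarrow> (nat \<Rightarrow> real) \<Rightarrow> nat \<Rightarrow> (nat \<times> real) set \<Rightarrow> (nat \<times> real \<Rightarrow> int) \<Rightarrow> bool" where
  "satisfiable X y d E s \<longleftrightarrow> (\<forall>e\<in>E. s e \<in> {-1, 0, 1}) \<and>
     (\<exists>lam\<in>vecs (d - 1). \<forall>(i, c)\<in>E.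
        (s (i, c) = 0 \<longrightarrow> resid X y d lam i = c) \<and>
        (s (i, c) = -1 \<longrightarrow> resid X y d lam i < c) \<and>
        (s (i, c) = 1 \<longrightarrow> resid X y d lam i > c))"

definition region :: "(nat \<Rightarrow> nat \<Rightarrow> real) \<Rightarrow> (nat \<Rightarrow> real) \<Rightarrow> nat \<Rightarrow> (nat \<times> real) set \<Rightarrow> (nat \<times> real \<Rightarrow> int) \<Rightarrow> (nat \<Rightarrow> real) set" where
  "region X y d E s = {lam \<in> vecs (d - 1). \<forall>(i, c)\<in>E.
        (s (i, c) = 0 \<longrightarrow> resid X y d lam i = c) \<and>
        (s (i, c) = -1 \<longrightarrow> resid X y d lam i \<le> c) \<and>
        (s (i, c) = 1 \<longrightarrow> resid X y d lam i \<ge> c)}"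

definition regions :: "(nat \<Rightarrow> nat \<Rightarrow> real) \<Rightarrow> (nat \<Rightarrow> real) \<Rightarrow> nat \<Rightarrow> (nat \<times> real) set \<Rightarrow> (nat \<Rightarrow> real) set set" where
  "regions X y d E = {region X y d E s | s. satisfiable X y d E s}"

definition BM :: "(nat \<Rightarrow> nat \<Rightarrow> real) \<Rightarrow> (nat \<Rightarrow> real) \<Rightarrow> nat \<Rightarrow> nat \<Rightarrow> real \<Rightarrow> (nat \<Rightarrow> real) \<Rightarrow> nat set" where
  "BM X y n d M lam = {i. i < n \<and> \<bar>resid X y d lam i\<bar> > M}"

definition BdM :: "(nat \<Rightarrow> nat \<Rightarrow> real) \<Rightarrow> (nat \<Rightarrow> real) \<Rightarrow> nat \<Rightarrow> nat \<Rightarrow> real \<Rightarrow> real \<Rightarrow> (nat \<Rightarrow> real) \<Rightarrow> nat set" where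
  "BdM X y n d M delta lam = {i. i < n \<and> \<bar>resid X y d lam i\<bar> < delta * M / sqrt n}"

definition gfeas :: "(nat \<Rightarrow> nat \<Rightarrow> real) \<Rightarrow> (nat \<Rightarrow> real) \<Rightarrow> nat \<Rightarrow> nat \<Rightarrow> (nat \<Rightarrow> real) set \<Rightarrow> (nat \<Rightarrow> real) \<Rightarrow> (nat \<Rightarrow> real) \<Rightarrow> (nat \<Rightarrow> real) \<Rightarrow> bool" where
  "gfeas X y n d R sigma g lam \<longleftrightarrow> lam \<in> R \<and> (\<forall>j<d. (\<Sum>i<n. X i j * g i) = 0) \<and>
     (\<forall>i<n. (sigma i = 1 \<longrightarrow> 0 \<le> g i \<and> g i \<le> resid X y d lam i) \<and>
            (sigma i = -1 \<longrightarrow> resid X y d lam i \<le> g i \<and> g i \<le> 0))"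

definition gobj :: "(nat \<Rightarrow> nat \<Rightarrow> real) \<Rightarrow> (nat \<Rightarrow> real) \<Rightarrow> nat \<Rightarrow> nat \<Rightarrow> real \<Rightarrow> real \<Rightarrow> (nat \<Rightarrow> real) \<Rightarrow> (nat \<Rightarrow> real) \<Rightarrow> real" where
  "gobj X y n d M delta lam0 g =
     (\<Sum>i\<in>{..<n} - (BM X y n d M lam0 \<union> BdM X y n d M delta lam0).
        min (g i / resid X y d lam0 i) 1)"

definition div01 :: "real \<Rightarrow> real \<Rightarrow> real" where
  "div01 a b = (if a = 0 \<and> b = 0 then 1 else a / b)"

definition Vhat :: "(nat \<Rightarrow> nat \<Rightarrow> real) \<Rightarrow> (nat \<Rightarrow> real) \<Rightarrow> nat \<Rightarrow> nat \<Rightarrow> (nat \<Rightarrow> real) \<Rightarrow> (nat \<Rightarrow> real) \<Rightarrow> real" where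
  "Vhat X y n d g lam = (\<Sum>i<n. div01 (g i) (resid X y d lam i))"

end

theory Submission
  imports Defs "HOL-Library.FuncSet"
begin

lemma resid_affine:
  "resid X y d (\<lambda>j. a j + t * (b j - a j)) i = resid X y d a i + t * (resid X y d b i - resid X y d a i)"
  unfolding resid_def by (simp add: algebra_simps sum.distrib sum_subtractf sum_distrib_left)

lemma vecs_affine:
  "a \<in> vecs k \<Longrightarrow> b \<in> vecs k \<Longrightarrow> (\<lambda>j. a j + t * (b j - a j)) \<in> vecs k"
  unfolding vecs_def by auto

definition pat :: "(nat \<Rightarrow> nat \<Rightarrow> real) \<Rightarrow> (nat \<Rightarrow> real) \<Rightarrow> nat \<Rightarrow> (nat \<Rightarrow> real) \<Rightarrow> nat \<times> real \<Rightarrow> int" where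
  "pat X y d lam e = (if resid X y d lam (fst e) = snd e then 0
       else if resid X y d lam (fst e) < snd e then -1 else 1)"

lemma in_region_pat:
  "mu \<in> region X y d E (pat X y d lam) \<longleftrightarrow> mu \<in> vecs (d - 1) \<and>
     (\<forall>(i,c)\<in>E. (resid X y d lam i = c \<longrightarrow> resid X y d mu i = c) \<and>
                (resid X y d lam i < c \<longrightarrow> resid X y d mu i \<le> c) \<and>
                (resid X y d lam i > c \<longrightarrow> resid X y d mu i \<ge> c))"
  unfolding region_def pat_def by auto

lemma self_region_pat: "lam \<in> vecs (d - 1) \<Longrightarrow> lam \<in> region X y d E (pat X y d lam)"
  unfolding in_region_pat by auto

lemma satisfiable_pat: "lam \<in> vecs (d - 1) \<Longrightarrow> satisfiable X y d E (pat X y d lam)"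
  unfolding satisfiable_def pat_def by (auto intro!: bexI[of _ lam])

lemma pat_in_regions: "lam \<in> vecs (d - 1) \<Longrightarrow> region X y d E (pat X y d lam) \<in> regions X y d E"
  unfolding regions_def using satisfiable_pat by blast

lemma region_sub_vecs: "region X y d E s \<subseteq> vecs (d - 1)"
  unfolding region_def by auto

lemma region_mono_pat:
  assumes "mu \<in> region X y d E (pat X y d lam)"
  shows "region X y d E (pat X y d mu) \<subseteq> region X y d E (pat X y d lam)"
proof
  fix nu assume nu: "nu \<in> region X y d E (pat X y d mu)"
  show "nu \<in> region X y d E (pat X y d lam)"
    unfolding in_region_pat
  proof (intro conjI ballI)
    show "nu \<in> vecs (d - 1)" using nu region_sub_vecs by blast
    fix e assume e: "e \<in> E"
    obtain i c where ic: "e = (i, c)" by force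
    have m: "(resid X y d lam i = c \<longrightarrow> resid X y d mu i = c) \<and>
                (resid X y d lam i < c \<longrightarrow> resid X y d mu i \<le> c) \<and>
                (resid X y d lam i > c \<longrightarrow> resid X y d mu i \<ge> c)"
      using assms e ic unfolding in_region_pat by auto
    have n: "(resid X y d mu i = c \<longrightarrow> resid X y d nu i = c) \<and>
                (resid X y d mu i < c \<longrightarrow> resid X y d nu i \<le> c) \<and>
                (resid X y d mu i > c \<longrightarrow> resid X y d nu i \<ge> c)"
      using nu e ic unfolding in_region_pat by auto
    show "case e of (i, c) \<Rightarrow> (resid X y d lam i = c \<longrightarrow> resid X y d nu i = c) \<and>
                (resid X y d lam i < c \<longrightarrow> resid X y d nu i \<le> c) \<and>
                (resid X y d lam i > c \<longrightarrow> resid X y d nu i \<ge> c)"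
      using m n ic by auto
  qed
qed

lemma region_mono_sat:
  assumes "satisfiable X y d E s" "lam \<in> region X y d E s"
  shows "region X y d E (pat X y d lam) \<subseteq> region X y d E s"
proof
  fix nu assume nu: "nu \<in> region X y d E (pat X y d lam)"
  show "nu \<in> region X y d E s"
    unfolding region_def
  proof (intro CollectI conjI ballI)
    show "nu \<in> vecs (d - 1)" using nu region_sub_vecs by blast
    fix e assume e: "e \<in> E"
    obtain i c where ic: "e = (i, c)" by force
    have s3: "s (i,c) \<in> {-1,0,1}" using assms(1) e ic unfolding satisfiable_def by auto
    have m: "(s (i, c) = 0 \<longrightarrow> resid X y d lam i = c) \<and>
        (s (i, c) = -1 \<longrightarrow> resid X y d lam i \<le> c) \<and>
        (s (i, c) = 1 \<longrightarrow> resid X y d lam i \<ge> c)"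
      using assms(2) e ic unfolding region_def by auto
    have n: "(resid X y d lam i = c \<longrightarrow> resid X y d nu i = c) \<and>
                (resid X y d lam i < c \<longrightarrow> resid X y d nu i \<le> c) \<and>
                (resid X y d lam i > c \<longrightarrow> resid X y d nu i \<ge> c)"
      using nu e ic unfolding in_region_pat by auto
    show "case e of (i, c) \<Rightarrow> (s (i, c) = 0 \<longrightarrow> resid X y d nu i = c) \<and>
        (s (i, c) = -1 \<longrightarrow> resid X y d nu i \<le> c) \<and>
        (s (i, c) = 1 \<longrightarrow> resid X y d nu i \<ge> c)"
      using m n ic s3 by force
  qed
qed

lemma finite_regions:
  assumes "finite E"
  shows "finite (regions X y d E)"
proof -
  have "regions X y d E \<subseteq> (\<lambda>h. region X y d E h) ` (PiE E (\<lambda>_. {-1,0,1}))"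
  proof
    fix R assume "R \<in> regions X y d E"
    then obtain s where s: "satisfiable X y d E s" "R = region X y d E s"
      unfolding regions_def by auto
    have "region X y d E s = region X y d E (restrict s E)"
      unfolding region_def by (auto simp: restrict_def)
    moreover have "restrict s E \<in> PiE E (\<lambda>_. {-1,0,1})"
      using s(1) unfolding satisfiable_def by auto
    ultimately show "R \<in> (\<lambda>h. region X y d E h) ` (PiE E (\<lambda>_. {-1,0,1}))"
      using s by auto
  qed
  moreover have "finite (PiE E (\<lambda>_. {-1::int,0,1}))"
    using assms by (intro finite_PiE) auto
  ultimately show ?thesis using finite_subset by blast
qed

lemma finite_eqns:
  assumes "S \<subseteq> {..<n}"
  shows "finite (eqns n M eps delta S)"
proof -
  define K where "K = nat \<lceil>log (1 + eps) (sqrt n / delta)\<rceil>"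
  define f where "f = (\<lambda>k::nat. (1 + eps) ^ k * delta * M / sqrt n)"
  have "eqns n M eps delta S \<subseteq> ({..<n} \<times> {0, M, -M, delta * M / sqrt n, - (delta * M / sqrt n)})
      \<union> ({..<n} \<times> (f ` {..K} \<union> (\<lambda>k. - f k) ` {..K}))"
  proof
    fix e assume e: "e \<in> eqns n M eps delta S"
    obtain i c where ic: "e = (i,c)" by force
    show "e \<in> ({..<n} \<times> {0, M, -M, delta * M / sqrt n, - (delta * M / sqrt n)})
      \<union> ({..<n} \<times> (f ` {..K} \<union> (\<lambda>k. - f k) ` {..K}))"
    proof (cases "i < n \<and> (c = 0 \<or> c = M \<or> c = - M \<or> c = delta * M / sqrt n \<or> c = - (delta * M / sqrt n))")
      case True then show ?thesis using ic by auto
    next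
      case False
      then obtain k :: nat where k: "i \<in> S" "int k \<le> \<lceil>log (1 + eps) (sqrt n / delta)\<rceil>"
          "c = f k \<or> c = - f k"
        using e ic unfolding eqns_def f_def by auto
      have "k \<le> K" using k(2) unfolding K_def by linarith
      then show ?thesis using k assms ic by auto
    qed
  qed
  moreover have "finite (({..<n} \<times> {0, M, -M, delta * M / sqrt n, - (delta * M / sqrt n)})
      \<union> ({..<n} \<times> (f ` {..K} \<union> (\<lambda>k. - f k) ` {..K})))" by auto
  ultimately show ?thesis using finite_subset by blast
qed

lemma sum_neg_ex:
  fixes f :: "nat \<Rightarrow> real"
  assumes "sum f T < 0" shows "\<exists>j\<in>T. f j < 0"
proof (rule ccontr)
  assume "\<not> (\<exists>j\<in>T. f j < 0)"
  then have "\<forall>j\<in>T. 0 \<le> f j" by auto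
  then have "0 \<le> sum f T" by (simp add: sum_nonneg)
  then show False using assms by simp
qed

lemma neg_sgn_mul: "(p::real) \<noteq> 0 \<Longrightarrow> - (sgn p * p) < 0"
  by (cases "p > 0") (auto simp: sgn_if)

lemma sgn_mul_neg: "sgn (a::real) * b < 0 \<Longrightarrow> a * b < 0"
proof -
  assume h: "sgn a * b < 0"
  consider "a > 0" | "a < 0" | "a = 0" by linarith
  then show ?thesis
  proof cases
    case 1 then show ?thesis using h by (simp add: mult_pos_neg)
  next
    case 2 then show ?thesis using h by (simp add: mult_neg_pos)
  next
    case 3 then show ?thesis using h by simp
  qed
qed

lemma descent:
  assumes finE: "finite E" and zeros: "\<forall>i<n. (i, 0::real) \<in> E" and T: "T \<subseteq> {..<n}"
  shows "lam \<in> vecs (d - 1) \<Longrightarrow> \<exists>mu \<in> region X y d E (pat X y d lam).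
     (\<forall>nu \<in> region X y d E (pat X y d mu). \<forall>i<n. resid X y d nu i = resid X y d mu i) \<and>
     (\<Sum>i\<in>T. \<bar>resid X y d mu i\<bar>) \<le> (\<Sum>i\<in>T. \<bar>resid X y d lam i\<bar>)"
proof (induction "card {e\<in>E. resid X y d lam (fst e) \<noteq> snd e}" arbitrary: lam rule: less_induct)
  case less
  note lamv = less.prems
  show ?case
  proof (cases "\<forall>nu \<in> region X y d E (pat X y d lam). \<forall>i<n. resid X y d nu i = resid X y d lam i")
    case True
    then show ?thesis using lamv self_region_pat by blast
  next
    case False
    then obtain nu i where nu: "nu \<in> region X y d E (pat X y d lam)" and i: "i < n"
      and ne: "resid X y d nu i \<noteq> resid X y d lam i" by blast
    have nuv: "nu \<in> vecs (d - 1)" using nu region_sub_vecs by blast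
    have nuF: "\<And>j c. (j,c) \<in> E \<Longrightarrow> (resid X y d lam j = c \<longrightarrow> resid X y d nu j = c)"
      using nu unfolding in_region_pat by auto
    define Dl where "Dl = (\<lambda>j. resid X y d nu j - resid X y d lam j)"
    define dl where "dl = (\<Sum>j\<in>T. sgn (resid X y d lam j) * Dl j)"
    have ri0: "resid X y d lam i \<noteq> 0"
    proof
      assume "resid X y d lam i = 0"
      then have "resid X y d nu i = 0" using nuF[of i 0] zeros i by auto
      then show False using ne \<open>resid X y d lam i = 0\<close> by simp
    qed
    define sg :: real where "sg = (if dl > 0 then -1 else if dl < 0 then 1
        else - sgn (resid X y d lam i * Dl i))"
    define D' where "D' = (\<lambda>j. sg * Dl j)"
    define nu' where "nu' = (\<lambda>j. lam j + sg * (nu j - lam j))"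
    define L where "L = (\<lambda>t::real. (\<lambda>j. lam j + t * (nu' j - lam j)))"
    have nu'v: "nu' \<in> vecs (d - 1)" unfolding nu'_def using vecs_affine[OF lamv nuv] .
    have Lv: "L t \<in> vecs (d - 1)" for t unfolding L_def using vecs_affine[OF lamv nu'v] .
    have rnu': "resid X y d nu' j = resid X y d lam j + D' j" for j
      unfolding nu'_def D'_def Dl_def resid_affine by simp
    have rL: "resid X y d (L t) j = resid X y d lam j + t * D' j" for t j
      unfolding L_def resid_affine rnu' by simp
    have tightD: "\<And>j c. (j,c) \<in> E \<Longrightarrow> resid X y d lam j = c \<Longrightarrow> D' j = 0"
      using nuF unfolding D'_def Dl_def by auto
    have sgdl: "sg * dl \<le> 0" unfolding sg_def by auto
    have key: "\<exists>j<n. resid X y d lam j \<noteq> 0 \<and> resid X y d lam j * D' j < 0"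
    proof (cases "dl = 0")
      case True
      have "Dl i \<noteq> 0" using ne unfolding Dl_def by simp
      then have "resid X y d lam i * Dl i \<noteq> 0" using ri0 by simp
      moreover have "resid X y d lam i * D' i = - (sgn (resid X y d lam i * Dl i) * (resid X y d lam i * Dl i))"
        unfolding D'_def sg_def using True by (simp add: algebra_simps)
      ultimately have "resid X y d lam i * D' i < 0"
        using neg_sgn_mul by metis
      then show ?thesis using i ri0 by blast
    next
      case False
      then have "sg * dl < 0" unfolding sg_def by auto
      then have "(\<Sum>j\<in>T. sgn (resid X y d lam j) * D' j) < 0"
        unfolding dl_def D'_def by (simp add: sum_distrib_left algebra_simps)
      then obtain j where j: "j \<in> T" "sgn (resid X y d lam j) * D' j < 0"
        using sum_neg_ex by blast
      then have "resid X y d lam j \<noteq> 0" by auto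
      moreover have "resid X y d lam j * D' j < 0" using j(2) sgn_mul_neg by blast
      ultimately show ?thesis using j T by blast
    qed
    then obtain j0 where j0: "j0 < n" "resid X y d lam j0 \<noteq> 0" "resid X y d lam j0 * D' j0 < 0"
      by blast
    define H where "H = {t. t > 0 \<and> (\<exists>e\<in>E. resid X y d lam (fst e) \<noteq> snd e \<and>
        resid X y d lam (fst e) + t * D' (fst e) = snd e)}"
    have Hsub: "H \<subseteq> (\<lambda>e. (snd e - resid X y d lam (fst e)) / D' (fst e)) ` E"
    proof
      fix t assume "t \<in> H"
      then obtain e where e: "e \<in> E" "resid X y d lam (fst e) \<noteq> snd e"
        "resid X y d lam (fst e) + t * D' (fst e) = snd e" unfolding H_def by auto
      then have "D' (fst e) \<noteq> 0" by auto
      then have "t = (snd e - resid X y d lam (fst e)) / D' (fst e)" using e(3)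
        by (simp add: field_simps)
      then show "t \<in> (\<lambda>e. (snd e - resid X y d lam (fst e)) / D' (fst e)) ` E" using e(1) by blast
    qed
    have finH: "finite H" using finite_subset[OF Hsub] finE by blast
    define t0 where "t0 = - resid X y d lam j0 / D' j0"
    have D'j0: "D' j0 \<noteq> 0" using j0 by auto
    have t0H: "t0 \<in> H"
    proof -
      have "t0 > 0" unfolding t0_def using j0(3) D'j0
        by (cases "D' j0 > 0") (auto simp: field_simps mult_less_0_iff)
      moreover have "resid X y d lam j0 + t0 * D' j0 = 0" unfolding t0_def using D'j0 by simp
      ultimately show ?thesis unfolding H_def using zeros j0 by (auto intro!: bexI[of _ "(j0, 0)"])
    qed
    define ts where "ts = Min H"
    have tsH: "ts \<in> H" unfolding ts_def using finH t0H Min_in by blast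
    have tsmin: "\<And>t. t \<in> H \<Longrightarrow> ts \<le> t" unfolding ts_def using finH by simp
    have tspos: "ts > 0" using tsH unfolding H_def by auto
    define mu' where "mu' = L ts"
    have mu'v: "mu' \<in> vecs (d - 1)" unfolding mu'_def using Lv .
    have rmu': "resid X y d mu' j = resid X y d lam j + ts * D' j" for j
      unfolding mu'_def rL ..
    have mu'reg: "mu' \<in> region X y d E (pat X y d lam)"
      unfolding in_region_pat
    proof (intro conjI ballI)
      show "mu' \<in> vecs (d - 1)" by (rule mu'v)
      fix e assume e: "e \<in> E"
      obtain j c where jc: "e = (j,c)" by force
      have A: "resid X y d lam j = c \<Longrightarrow> resid X y d mu' j = c"
        using tightD[of j c] e jc rmu' by auto
      have B: "resid X y d lam j < c \<Longrightarrow> resid X y d mu' j \<le> c"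
      proof (rule ccontr)
        assume lt: "resid X y d lam j < c" and "\<not> resid X y d mu' j \<le> c"
        then have gt: "resid X y d lam j + ts * D' j > c" using rmu' by simp
        then have "ts * D' j > 0" using lt by linarith
        then have Dp: "D' j > 0" using tspos by (simp add: zero_less_mult_iff)
        define t1 where "t1 = (c - resid X y d lam j) / D' j"
        have t1p: "t1 > 0" unfolding t1_def using Dp lt by simp
        have t1e: "resid X y d lam j + t1 * D' j = c" unfolding t1_def using Dp by simp
        have "t1 \<in> H" unfolding H_def using t1p t1e e jc lt by (auto intro!: bexI[of _ "(j,c)"])
        moreover have "t1 < ts" using t1e gt Dp
          by (smt (verit, best) mult_right_mono)
        ultimately show False using tsmin by force
      qed
      have C: "resid X y d lam j > c \<Longrightarrow> resid X y d mu' j \<ge> c"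
      proof (rule ccontr)
        assume lt: "resid X y d lam j > c" and "\<not> resid X y d mu' j \<ge> c"
        then have gt: "resid X y d lam j + ts * D' j < c" using rmu' by simp
        then have "ts * D' j < 0" using lt by linarith
        then have Dp: "D' j < 0" using tspos by (simp add: mult_less_0_iff)
        define t1 where "t1 = (c - resid X y d lam j) / D' j"
        have t1p: "t1 > 0" unfolding t1_def using Dp lt by (simp add: divide_neg_neg)
        have t1e: "resid X y d lam j + t1 * D' j = c" unfolding t1_def using Dp by simp
        have "t1 \<in> H" unfolding H_def using t1p t1e e jc lt by (auto intro!: bexI[of _ "(j,c)"])
        moreover have "t1 < ts" using t1e gt Dp
          by (smt (verit, best) mult_right_mono_neg)
        ultimately show False using tsmin by force
      qed
      show "case e of (j, c) \<Rightarrow> (resid X y d lam j = c \<longrightarrow> resid X y d mu' j = c) \<and>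
                (resid X y d lam j < c \<longrightarrow> resid X y d mu' j \<le> c) \<and>
                (resid X y d lam j > c \<longrightarrow> resid X y d mu' j \<ge> c)"
        using A B C jc by auto
    qed
    have cardlt: "card {e\<in>E. resid X y d mu' (fst e) \<noteq> snd e} < card {e\<in>E. resid X y d lam (fst e) \<noteq> snd e}"
    proof (rule psubset_card_mono)
      show "finite {e\<in>E. resid X y d lam (fst e) \<noteq> snd e}" using finE by simp
      have sub: "{e\<in>E. resid X y d mu' (fst e) \<noteq> snd e} \<subseteq> {e\<in>E. resid X y d lam (fst e) \<noteq> snd e}"
        using tightD rmu' by force
      obtain e where e: "e \<in> E" "resid X y d lam (fst e) \<noteq> snd e"
        "resid X y d lam (fst e) + ts * D' (fst e) = snd e" using tsH unfolding H_def by auto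
      have "e \<notin> {e\<in>E. resid X y d mu' (fst e) \<noteq> snd e}" using e rmu' by auto
      then show "{e\<in>E. resid X y d mu' (fst e) \<noteq> snd e} \<subset> {e\<in>E. resid X y d lam (fst e) \<noteq> snd e}"
        using sub e by blast
    qed
    have absmu': "\<bar>resid X y d mu' j\<bar> = \<bar>resid X y d lam j\<bar> + ts * (sgn (resid X y d lam j) * D' j)"
      if jT: "j \<in> T" for j
    proof -
      have jn: "j < n" using jT T by auto
      have F: "(resid X y d lam j = 0 \<longrightarrow> resid X y d mu' j = 0) \<and>
                (resid X y d lam j < 0 \<longrightarrow> resid X y d mu' j \<le> 0) \<and>
                (resid X y d lam j > 0 \<longrightarrow> resid X y d mu' j \<ge> 0)"
        using mu'reg zeros jn unfolding in_region_pat by fastforce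
      have "resid X y d lam j = 0 \<Longrightarrow> D' j = 0" using tightD zeros jn by blast
      then show ?thesis using F rmu'[of j]
        by (cases "resid X y d lam j > 0"; cases "resid X y d lam j < 0") (auto simp: algebra_simps)
    qed
    have Phi: "(\<Sum>j\<in>T. \<bar>resid X y d mu' j\<bar>) \<le> (\<Sum>j\<in>T. \<bar>resid X y d lam j\<bar>)"
    proof -
      have "(\<Sum>j\<in>T. \<bar>resid X y d mu' j\<bar>) = (\<Sum>j\<in>T. \<bar>resid X y d lam j\<bar>) + ts * (sg * dl)"
        using absmu' unfolding dl_def D'_def
        by (simp add: sum.distrib sum_distrib_left algebra_simps)
      moreover have "ts * (sg * dl) \<le> 0" using tspos sgdl by (simp add: mult_nonneg_nonpos)
      ultimately show ?thesis by simp
    qed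
    obtain mu where mu: "mu \<in> region X y d E (pat X y d mu')"
      "\<forall>nu \<in> region X y d E (pat X y d mu). \<forall>i<n. resid X y d nu i = resid X y d mu i"
      "(\<Sum>i\<in>T. \<bar>resid X y d mu i\<bar>) \<le> (\<Sum>i\<in>T. \<bar>resid X y d mu' i\<bar>)"
      using less.hyps[OF cardlt mu'v] by blast
    have "mu \<in> region X y d E (pat X y d lam)" using mu(1) region_mono_pat[OF mu'reg] by blast
    then show ?thesis using mu Phi by force
  qed
qed

lemma ls_bound:
  assumes d1: "1 \<le> d" and w: "\<forall>i<n. 0 \<le> w i \<and> w i \<le> 1"
    and orth: "\<forall>j<d. (\<Sum>i<n. X i j * (w i * resid X y d lam i)) = 0"
  shows "(\<Sum>i<n. w i * (resid X y d lam i)^2) \<le> (\<Sum>i<n. ((\<Sum>j<d. X i j * beta0 j) - y i)^2)"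
proof -
  obtain d' where d': "d = Suc d'" using d1 by (cases d) auto
  define beta where "beta = (\<lambda>j. if j = 0 then 0 else lam (j - 1))"
  have rb: "resid X y d lam i = (\<Sum>j<d. X i j * beta j) - y i" for i
    unfolding resid_def beta_def d' sum.lessThan_Suc_shift by simp
  define h where "h = (\<lambda>i. \<Sum>j<d. X i j * (beta0 j - beta j))"
  define b where "b = (\<lambda>i. (\<Sum>j<d. X i j * beta0 j) - y i)"
  have bh: "b i = resid X y d lam i + h i" for i
    unfolding b_def rb h_def by (simp add: algebra_simps sum_subtractf)
  have cross: "(\<Sum>i<n. w i * resid X y d lam i * h i) = 0"
  proof -
    have "(\<Sum>i<n. w i * resid X y d lam i * h i) =
        (\<Sum>i<n. \<Sum>j<d. (beta0 j - beta j) * (X i j * (w i * resid X y d lam i)))"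
      unfolding h_def by (simp add: sum_distrib_left algebra_simps)
    also have "\<dots> = (\<Sum>j<d. \<Sum>i<n. (beta0 j - beta j) * (X i j * (w i * resid X y d lam i)))"
      by (rule sum.swap)
    also have "\<dots> = (\<Sum>j<d. (beta0 j - beta j) * (\<Sum>i<n. X i j * (w i * resid X y d lam i)))"
      by (simp add: sum_distrib_left)
    also have "\<dots> = 0" using orth by simp
    finally show ?thesis .
  qed
  have "(\<Sum>i<n. w i * (resid X y d lam i)^2) \<le> (\<Sum>i<n. w i * (resid X y d lam i)^2)
        + 2 * (\<Sum>i<n. w i * resid X y d lam i * h i) + (\<Sum>i<n. w i * (h i)^2)"
  proof -
    have "0 \<le> (\<Sum>i<n. w i * (h i)^2)" using w by (intro sum_nonneg) auto
    then show ?thesis using cross by simp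
  qed
  also have "\<dots> = (\<Sum>i<n. w i * (b i)^2)"
    unfolding bh by (simp add: power2_eq_square sum.distrib sum_distrib_left algebra_simps)
  also have "\<dots> \<le> (\<Sum>i<n. (b i)^2)"
    by (rule sum_mono) (use w in \<open>auto intro!: mult_left_le_one_le\<close>)
  finally show ?thesis unfolding b_def .
qed

lemma div01_props:
  assumes "(0 \<le> g \<and> g \<le> r) \<or> (r \<le> g \<and> g \<le> 0)"
  shows "0 \<le> div01 g r" "div01 g r \<le> 1" "div01 g r * r = g"
  using assms unfolding div01_def
  by (auto simp: divide_simps split: if_splits)

definition SG :: "real \<Rightarrow> real \<Rightarrow> real \<Rightarrow> bool" where
  "SG g r0 rh \<longleftrightarrow> (0 \<le> g \<and> g \<le> rh \<and> 0 \<le> r0) \<or> (rh \<le> g \<and> g \<le> 0 \<and> r0 \<le> 0)"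

lemma SG_ratio: "SG g r0 rh \<Longrightarrow> g / r0 = \<bar>g\<bar> / \<bar>r0\<bar>"
  unfolding SG_def by (auto simp: abs_if divide_simps)

lemma SG_div01: "SG g r0 rh \<Longrightarrow> div01 g rh = (if rh = 0 then 1 else \<bar>g\<bar> / \<bar>rh\<bar>)"
  unfolding SG_def div01_def by (auto simp: abs_if divide_simps)

lemma SG_abs: "SG g r0 rh \<Longrightarrow> \<bar>g\<bar> \<le> \<bar>rh\<bar>"
  unfolding SG_def by auto

lemma item_t_range: "SG g r0 rh \<Longrightarrow> 0 \<le> min (g / r0) 1 \<and> min (g / r0) 1 \<le> 1"
  using SG_ratio[of g r0 rh] by auto

lemma item_u_range: "SG g r0 rh \<Longrightarrow> 0 \<le> div01 g rh \<and> div01 g rh \<le> 1"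
  using SG_div01[of g r0 rh] SG_abs[of g r0 rh] by (auto simp: divide_simps)

lemma item_u_le:
  assumes "SG g r0 rh" "r0 \<noteq> 0" "\<bar>rh\<bar> \<le> \<bar>r0\<bar>"
  shows "min (g / r0) 1 \<le> div01 g rh"
proof (cases "rh = 0")
  case True then show ?thesis using SG_div01[OF assms(1)] by simp
next
  case False
  have "\<bar>g\<bar> / \<bar>r0\<bar> \<le> \<bar>g\<bar> / \<bar>rh\<bar>" using False assms(3)
    by (intro divide_left_mono) auto
  moreover have "min (g / r0) 1 \<le> g / r0" by (rule min.cobounded1)
  moreover have "div01 g rh = \<bar>g\<bar> / \<bar>rh\<bar>" using SG_div01[OF assms(1)] False by simp
  moreover have "g / r0 = \<bar>g\<bar> / \<bar>r0\<bar>" using SG_ratio[OF assms(1)] .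
  ultimately show ?thesis by linarith
qed

lemma aux_m2e: "0 \<le> (m::real) \<Longrightarrow> m \<le> 1 \<Longrightarrow> 0 \<le> e \<Longrightarrow> m - 2 * e \<le> m * (1 - 2 * e)"
proof -
  assume a: "0 \<le> m" "m \<le> 1" "0 \<le> e"
  have "m * e \<le> e" using mult_left_le_one_le[of e m] a by simp
  moreover have "m * (1 - 2 * e) = m - 2 * (m * e)" by (simp add: algebra_simps)
  ultimately show ?thesis by linarith
qed

lemma aux_w3: "(w::real) \<le> 1 \<Longrightarrow> a \<le> 1 \<Longrightarrow> w - (1 - a) \<le> w * a"
proof -
  assume "w \<le> 1" "a \<le> 1"
  then have "0 \<le> (1 - w) * (1 - a)" by simp
  then show ?thesis by (simp add: algebra_simps)
qed

lemma frac_aux: "(a::real) > 0 \<Longrightarrow> b > 0 \<Longrightarrow> c > 0 \<Longrightarrow> x / (b * c) = x / (a * c) * (a / b)"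
  by (simp add: field_simps)

lemma item_u_good:
  assumes "SG g r0 rh" "r0 \<noteq> 0" "c > 0" "\<bar>\<bar>rh\<bar> / c - 1\<bar> \<le> eps" "\<bar>\<bar>r0\<bar> / c - 1\<bar> \<le> eps" "eps \<ge> 0"
  shows "min (g / r0) 1 - 2 * eps \<le> div01 g rh"
proof -
  have u0: "0 \<le> div01 g rh" using item_u_range[OF assms(1)] by simp
  have t1: "min (g / r0) 1 \<le> 1" "0 \<le> min (g / r0) 1" using item_t_range[OF assms(1)] by auto
  show ?thesis
  proof (cases "rh = 0 \<or> eps \<ge> 1/2")
    case True
    then show ?thesis
    proof
      assume "rh = 0" then show ?thesis using SG_div01[OF assms(1)] t1 assms(6) by simp
    next
      assume "eps \<ge> 1/2" then show ?thesis using u0 t1 by linarith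
    qed
  next
    case False
    then have rh0: "rh \<noteq> 0" and e2: "eps < 1/2" by auto
    have rhb: "\<bar>rh\<bar> \<le> (1 + eps) * c" using assms(4) assms(3)
      by (auto simp: abs_le_iff field_simps)
    have r0b: "(1 - eps) * c \<le> \<bar>r0\<bar>" using assms(5) assms(3)
      by (auto simp: abs_le_iff field_simps)
    have ag: "0 \<le> \<bar>g\<bar>" by simp
    have u: "div01 g rh = \<bar>g\<bar> / \<bar>rh\<bar>" using SG_div01[OF assms(1)] rh0 by simp
    have t: "g / r0 = \<bar>g\<bar> / \<bar>r0\<bar>" using SG_ratio[OF assms(1)] .
    have "\<bar>g\<bar> / \<bar>rh\<bar> \<ge> \<bar>g\<bar> / ((1 + eps) * c)"
      using rh0 rhb assms(3) assms(6) by (intro divide_left_mono) auto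
    moreover have "\<bar>g\<bar> / \<bar>r0\<bar> \<le> \<bar>g\<bar> / ((1 - eps) * c)"
    proof -
      have p: "0 < (1 - eps) * c" using assms(3) e2 by simp
      then have "0 < \<bar>r0\<bar>" using r0b by linarith
      then show ?thesis using r0b p by (intro divide_left_mono) auto
    qed
    moreover have "\<bar>g\<bar> / ((1 + eps) * c) = (\<bar>g\<bar> / ((1 - eps) * c)) * ((1 - eps) / (1 + eps))"
      using frac_aux[of "1 - eps" "1 + eps" c "\<bar>g\<bar>"] e2 assms(3) assms(6) by simp
    moreover have "(1 - eps) / (1 + eps) \<ge> 1 - 2 * eps"
    proof -
      have "(1 - 2*eps)*(1+eps) = 1 - eps - 2*(eps*eps)" by (simp add: algebra_simps)
      moreover have "0 \<le> eps * eps" by simp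
      ultimately have "(1 - 2*eps)*(1+eps) \<le> 1 - eps" by linarith
      then show ?thesis using assms(6) by (simp add: pos_le_divide_eq)
    qed
    ultimately have "div01 g rh \<ge> min (g / r0) 1 * (1 - 2 * eps)"
    proof -
      assume a1: "\<bar>g\<bar> / \<bar>rh\<bar> \<ge> \<bar>g\<bar> / ((1 + eps) * c)"
        and a2: "\<bar>g\<bar> / \<bar>r0\<bar> \<le> \<bar>g\<bar> / ((1 - eps) * c)"
        and a3: "\<bar>g\<bar> / ((1 + eps) * c) = (\<bar>g\<bar> / ((1 - eps) * c)) * ((1 - eps) / (1 + eps))"
        and a4: "(1 - eps) / (1 + eps) \<ge> 1 - 2 * eps"
      have "min (g / r0) 1 * (1 - 2 * eps) \<le> (\<bar>g\<bar> / ((1 - eps) * c)) * (1 - 2 * eps)"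
        using a2 t e2 by (intro mult_right_mono) auto
      also have "\<dots> \<le> (\<bar>g\<bar> / ((1 - eps) * c)) * ((1 - eps) / (1 + eps))"
        using a4 e2 assms(3) by (intro mult_left_mono) auto
      finally show ?thesis using a1 a3 u by linarith
    qed
    moreover have "min (g / r0) 1 * (1 - 2 * eps) \<ge> min (g / r0) 1 - 2 * eps"
      using aux_m2e[of "min (g / r0) 1" eps] t1 assms(6) by simp
    ultimately show ?thesis by linarith
  qed
qed

lemma aux_div: "(a::real) \<noteq> 0 \<Longrightarrow> x / a * (a * a) = x * a"
  by (simp add: field_simps)

lemma item_A4:
  assumes "SG g r0 rh" "\<bar>r0\<bar> = M" "\<bar>rh\<bar> \<ge> M" "M > 0"
  shows "min (g / r0) 1 * M^2 \<le> div01 g rh * rh^2"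
proof -
  have rh0: "rh \<noteq> 0" using assms by auto
  have u: "div01 g rh * rh^2 = \<bar>g\<bar> * \<bar>rh\<bar>"
  proof -
    have e1: "rh^2 = \<bar>rh\<bar> * \<bar>rh\<bar>" by (simp add: power2_eq_square)
    have e2: "\<bar>g\<bar> / \<bar>rh\<bar> * (\<bar>rh\<bar> * \<bar>rh\<bar>) = \<bar>g\<bar> * \<bar>rh\<bar>" by (rule aux_div) (use rh0 in simp)
    show ?thesis using SG_div01[OF assms(1)] rh0 e1 e2 by simp
  qed
  have "min (g / r0) 1 * M^2 \<le> (\<bar>g\<bar> / M) * M^2"
    using SG_ratio[OF assms(1)] assms(2,4) by (intro mult_right_mono) auto
  also have "\<dots> = \<bar>g\<bar> * M" using assms(4) by (simp add: power2_eq_square)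
  also have "\<dots> \<le> \<bar>g\<bar> * \<bar>rh\<bar>" using assms(3) by (intro mult_left_mono) auto
  finally show ?thesis using u by simp
qed

lemma same_sign_div: "(rs::real) * r0 > 0 \<Longrightarrow> rs / r0 = \<bar>rs\<bar> / \<bar>r0\<bar>"
  by (cases "rs > 0") (auto simp: zero_less_mult_iff)

lemma item_w_nonneg:
  fixes w rs r0 :: real
  assumes "0 \<le> w" "rs * r0 \<ge> 0"
  shows "0 \<le> min (w * rs / r0) 1"
proof -
  have "0 \<le> w * rs / r0"
  proof (cases "r0 = 0")
    case True then show ?thesis by simp
  next
    case False
    then have "w * rs / r0 = w * (rs * r0) / (r0 * r0)" by simp
    moreover have "0 \<le> w * (rs * r0)" using assms by (rule mult_nonneg_nonneg)
    then have "0 \<le> w * (rs * r0) / (r0 * r0)" by (rule divide_nonneg_nonneg) simp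
    ultimately show ?thesis by simp
  qed
  then show ?thesis by simp
qed

lemma item_w_good:
  fixes w rs r0 eps :: real
  assumes "0 \<le> w" "w \<le> 1" "rs * r0 > 0" "\<bar>\<bar>r0\<bar> / \<bar>rs\<bar> - 1\<bar> \<le> eps" "eps \<ge> 0"
  shows "w - eps \<le> min (w * rs / r0) 1"
proof -
  have rs0: "rs \<noteq> 0" and r00: "r0 \<noteq> 0" using assms(3) by (auto simp: zero_less_mult_iff)
  have q: "w * rs / r0 = w * \<bar>rs\<bar> / \<bar>r0\<bar>" using same_sign_div[OF assms(3)] by (metis times_divide_eq_right)
  have b: "\<bar>r0\<bar> \<le> (1 + eps) * \<bar>rs\<bar>" using assms(4) rs0
    by (auto simp: abs_le_iff field_simps)
  have "w - eps \<le> w / (1 + eps)"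
  proof -
    have "w * eps \<le> eps" using mult_left_le_one_le[of eps w] assms(1,2,5) by simp
    then have "w - eps \<le> w * (1 - eps)" by (simp add: algebra_simps)
    also have "w * (1 - eps) \<le> w / (1 + eps)"
    proof -
      have "w * (1 - eps) * (1 + eps) = w - w * (eps * eps)" by (simp add: algebra_simps)
      moreover have "0 \<le> w * (eps * eps)" using assms(1) by simp
      ultimately have "w * (1 - eps) * (1 + eps) \<le> w" by linarith
      then show ?thesis using assms(5) by (simp add: pos_le_divide_eq)
    qed
    finally show ?thesis .
  qed
  also have "w / (1 + eps) = w * \<bar>rs\<bar> / ((1 + eps) * \<bar>rs\<bar>)" using rs0 by simp
  also have "\<dots> \<le> w * \<bar>rs\<bar> / \<bar>r0\<bar>"
    using b r00 assms(1) by (intro divide_left_mono) auto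
  finally have "w - eps \<le> w * rs / r0" using q by simp
  then show ?thesis using assms(2,5) by simp
qed

lemma item_w_A3:
  fixes w rs r0 tau :: real
  assumes "0 \<le> w" "w \<le> 1" "rs * r0 > 0" "\<bar>r0\<bar> = tau" "\<bar>rs\<bar> \<le> tau"
  shows "w - (1 - \<bar>rs\<bar> / tau) \<le> min (w * rs / r0) 1"
proof -
  have tau: "tau > 0" using assms(3,4) by (auto simp: zero_less_mult_iff)
  have q: "w * rs / r0 = w * \<bar>rs\<bar> / tau" using same_sign_div[OF assms(3)] assms(4) by (metis times_divide_eq_right)
  have le1: "\<bar>rs\<bar> / tau \<le> 1" using assms(5) tau by simp
  have "w - (1 - \<bar>rs\<bar> / tau) \<le> w * (\<bar>rs\<bar> / tau)"
    using aux_w3[OF assms(2) le1] .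
  moreover have "w * (\<bar>rs\<bar> / tau) \<le> 1"
    using mult_le_one[OF assms(2) _ le1] assms(1) tau by simp
  ultimately show ?thesis using q by simp
qed

lemma regF5:
  fixes rl rm tau M :: real
  assumes h0: "(rl = 0 \<longrightarrow> rm = 0) \<and> (rl < 0 \<longrightarrow> rm \<le> 0) \<and> (rl > 0 \<longrightarrow> rm \<ge> 0)"
    and hM: "(rl = M \<longrightarrow> rm = M) \<and> (rl < M \<longrightarrow> rm \<le> M) \<and> (rl > M \<longrightarrow> rm \<ge> M)"
    and hmM: "(rl = -M \<longrightarrow> rm = -M) \<and> (rl < -M \<longrightarrow> rm \<le> -M) \<and> (rl > -M \<longrightarrow> rm \<ge> -M)"
    and ht: "(rl = tau \<longrightarrow> rm = tau) \<and> (rl < tau \<longrightarrow> rm \<le> tau) \<and> (rl > tau \<longrightarrow> rm \<ge> tau)"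
    and hmt: "(rl = -tau \<longrightarrow> rm = -tau) \<and> (rl < -tau \<longrightarrow> rm \<le> -tau) \<and> (rl > -tau \<longrightarrow> rm \<ge> -tau)"
  shows "(rl = 0 \<longrightarrow> rm = 0) \<and> (rl > 0 \<longrightarrow> rm \<ge> 0) \<and> (rl < 0 \<longrightarrow> rm \<le> 0) \<and>
    (\<bar>rl\<bar> < tau \<longrightarrow> \<bar>rm\<bar> \<le> tau) \<and> (\<bar>rl\<bar> > M \<longrightarrow> \<bar>rm\<bar> \<ge> M) \<and> (\<bar>rl\<bar> \<le> M \<longrightarrow> \<bar>rm\<bar> \<le> M) \<and>
    (\<bar>rl\<bar> = tau \<longrightarrow> rm = rl)"
proof (intro conjI impI)
  show "rl = 0 \<Longrightarrow> rm = 0" "rl > 0 \<Longrightarrow> rm \<ge> 0" "rl < 0 \<Longrightarrow> rm \<le> 0" using h0 by auto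
  show "\<bar>rl\<bar> < tau \<Longrightarrow> \<bar>rm\<bar> \<le> tau"
  proof -
    assume a: "\<bar>rl\<bar> < tau"
    then have "rm \<le> tau" "rm \<ge> -tau" using ht hmt by auto
    then show ?thesis by linarith
  qed
  show "\<bar>rl\<bar> > M \<Longrightarrow> \<bar>rm\<bar> \<ge> M"
  proof -
    assume a: "\<bar>rl\<bar> > M"
    then have "rl > M \<or> rl < -M" by linarith
    then have "rm \<ge> M \<or> rm \<le> -M" using hM hmM by auto
    then show ?thesis by linarith
  qed
  show "\<bar>rl\<bar> \<le> M \<Longrightarrow> \<bar>rm\<bar> \<le> M"
  proof -
    assume a: "\<bar>rl\<bar> \<le> M"
    then have "rl \<le> M" "rl \<ge> -M" by linarith+
    then have "rm \<le> M" "rm \<ge> -M" using hM hmM by (auto simp: le_less)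
    then show ?thesis by linarith
  qed
  show "\<bar>rl\<bar> = tau \<Longrightarrow> rm = rl"
  proof -
    assume a: "\<bar>rl\<bar> = tau"
    then have "rl = tau \<or> rl = -tau" by linarith
    then show ?thesis using ht hmt by auto
  qed
qed

lemma RF_gen:
  assumes "mu \<in> region X y d E (pat X y d lam)" "(i,0)\<in>E" "(i,M)\<in>E" "(i,-M)\<in>E" "(i,tau)\<in>E" "(i,-tau)\<in>E"
  shows "(resid X y d lam i = 0 \<longrightarrow> resid X y d mu i = 0) \<and> (resid X y d lam i > 0 \<longrightarrow> resid X y d mu i \<ge> 0) \<and>
    (resid X y d lam i < 0 \<longrightarrow> resid X y d mu i \<le> 0) \<and>
    (\<bar>resid X y d lam i\<bar> < tau \<longrightarrow> \<bar>resid X y d mu i\<bar> \<le> tau) \<and>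
    (\<bar>resid X y d lam i\<bar> > M \<longrightarrow> \<bar>resid X y d mu i\<bar> \<ge> M) \<and>
    (\<bar>resid X y d lam i\<bar> \<le> M \<longrightarrow> \<bar>resid X y d mu i\<bar> \<le> M) \<and>
    (\<bar>resid X y d lam i\<bar> = tau \<longrightarrow> resid X y d mu i = resid X y d lam i)"
proof -
  have h: "\<And>c. (i,c) \<in> E \<Longrightarrow> (resid X y d lam i = c \<longrightarrow> resid X y d mu i = c) \<and>
      (resid X y d lam i < c \<longrightarrow> resid X y d mu i \<le> c) \<and> (resid X y d lam i > c \<longrightarrow> resid X y d mu i \<ge> c)"
    using assms(1) unfolding in_region_pat by fastforce
  show ?thesis by (rule regF5[OF h[OF assms(2)] h[OF assms(3)] h[OF assms(4)] h[OF assms(5)] h[OF assms(6)]])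
qed

lemma sum_Un_le_nonneg:
  fixes f :: "nat \<Rightarrow> real"
  assumes "finite A" "finite B" "\<And>x. x \<in> A \<union> B \<Longrightarrow> 0 \<le> f x"
  shows "sum f (A \<union> B) \<le> sum f A + sum f B"
proof -
  have "sum f (A \<union> B) = sum f A + sum f B - sum f (A \<inter> B)" using sum_Un[OF assms(1,2)] .
  moreover have "0 \<le> sum f (A \<inter> B)" using assms(3) by (intro sum_nonneg) auto
  ultimately show ?thesis by simp
qed

lemma lower_bound:
  fixes X :: "nat \<Rightarrow> nat \<Rightarrow> real" and y :: "nat \<Rightarrow> real" and n d :: nat
    and beta0 :: "nat \<Rightarrow> real" and eps delta :: real and S :: "nat set"
    and wstar lamstar :: "nat \<Rightarrow> real" and Rstar :: "(nat \<Rightarrow> real) set"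
    and lam0 :: "(nat \<Rightarrow> real) set \<Rightarrow> nat \<Rightarrow> real"
    and sigma :: "(nat \<Rightarrow> real) set \<Rightarrow> nat \<Rightarrow> real"
    and ghat lamhat :: "(nat \<Rightarrow> real) set \<Rightarrow> nat \<Rightarrow> real"
    and M V :: real and E :: "(nat \<times> real) set" and Regs :: "(nat \<Rightarrow> real) set set"
  assumes n_pos: "1 \<le> n" and d_pos: "1 \<le> d"
    and M_def: "M = sqrt (\<Sum>i<n. ((\<Sum>j<d. X i j * beta0 j) - y i)\<^sup>2)"
    and eps_pos: "eps > 0" and delta_pos: "delta > 0" and S_sub: "S \<subseteq> {..<n}"
    and E_def: "E = eqns n M eps delta S"
    and Regs_def: "Regs = regions X y d E"
    and rep: "\<forall>R\<in>Regs. lam0 R \<in> R \<and>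
               (\<forall>i<n. sigma R i \<in> {-1, 1} \<and>
                  (sigma R i = 1 \<longrightarrow> (\<forall>lam\<in>R. resid X y d lam i \<ge> 0)) \<and>
                  (sigma R i = -1 \<longrightarrow> (\<forall>lam\<in>R. resid X y d lam i \<le> 0)))"
    and maxim: "\<forall>R\<in>Regs. gfeas X y n d R (sigma R) (ghat R) (lamhat R) \<and>
               (\<forall>g lam. gfeas X y n d R (sigma R) g lam \<longrightarrow>
                  gobj X y n d M delta (lam0 R) g \<le> gobj X y n d M delta (lam0 R) (ghat R))"
    and wstar_feas: "feasV X y n d wstar lamstar"
    and wstar_opt: "(\<Sum>i<n. \<bar>wstar i\<bar>) = V"
    and Rstar: "Rstar \<in> Regs" "lamstar \<in> Rstar"
    and stable: "\<forall>lam\<in>Rstar.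
        real (card {i \<in> {..<n} - ({i. i < n \<and> \<bar>resid X y d lamstar i\<bar> > M}
                                  \<union> {i. i < n \<and> \<bar>resid X y d lamstar i\<bar> \<le> delta * M / sqrt n}).
                 \<bar>\<bar>resid X y d lam i\<bar> / \<bar>resid X y d lamstar i\<bar> - 1\<bar> > eps})
        \<le> eps * real n"
    and H0: "\<forall>R\<in>Regs. real (card (BdM X y n d M delta (lam0 R))) \<le> eps * real n"
  shows "\<exists>R\<in>Regs. V - 12 * eps * real n - 1 \<le> Vhat X y n d (ghat R) (lamhat R)"
proof -
  let ?r = "resid X y d"
  define tau where "tau = delta * M / sqrt n"
  have finE: "finite E" using E_def finite_eqns[OF S_sub] by simp
  have Einc: "(i,0) \<in> E \<and> (i,M) \<in> E \<and> (i,-M) \<in> E \<and> (i,tau) \<in> E \<and> (i,-tau) \<in> E" if "i < n" for i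
    using that unfolding E_def eqns_def tau_def by auto
  have w01: "\<forall>i<n. 0 \<le> wstar i \<and> wstar i \<le> 1" and lsv: "lamstar \<in> vecs (d - 1)"
    and orth: "\<forall>j<d. (\<Sum>i<n. X i j * (wstar i * ?r lamstar i)) = 0"
    using wstar_feas unfolding feasV_def by auto
  define R' where "R' = region X y d E (pat X y d lamstar)"
  have R'Regs: "R' \<in> Regs" unfolding R'_def Regs_def using pat_in_regions[OF lsv] .
  have lsR': "lamstar \<in> R'" unfolding R'_def using self_region_pat[OF lsv] .
  have R'sub: "R' \<subseteq> Rstar"
  proof -
    obtain s where s: "satisfiable X y d E s" "Rstar = region X y d E s"
      using Rstar(1) unfolding Regs_def regions_def by auto
    show ?thesis unfolding R'_def using region_mono_sat[OF s(1)] Rstar(2) s(2) by blast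
  qed
  have R'vecs: "R' \<subseteq> vecs (d - 1)" unfolding R'_def by (rule region_sub_vecs)
  have RF: "(?r lamstar i = 0 \<longrightarrow> ?r mu i = 0) \<and> (?r lamstar i > 0 \<longrightarrow> ?r mu i \<ge> 0) \<and>
    (?r lamstar i < 0 \<longrightarrow> ?r mu i \<le> 0) \<and>
    (\<bar>?r lamstar i\<bar> < tau \<longrightarrow> \<bar>?r mu i\<bar> \<le> tau) \<and>
    (\<bar>?r lamstar i\<bar> > M \<longrightarrow> \<bar>?r mu i\<bar> \<ge> M) \<and>
    (\<bar>?r lamstar i\<bar> \<le> M \<longrightarrow> \<bar>?r mu i\<bar> \<le> M) \<and>
    (\<bar>?r lamstar i\<bar> = tau \<longrightarrow> ?r mu i = ?r lamstar i)" if "mu \<in> R'" "i < n" for mu i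
    using RF_gen[of mu X y d E lamstar i M tau] that Einc[OF that(2)] unfolding R'_def by blast
  have V_eq: "V = (\<Sum>i<n. wstar i)"
  proof -
    have "(\<Sum>i<n. \<bar>wstar i\<bar>) = (\<Sum>i<n. wstar i)" using w01 by (intro sum.cong) auto
    then show ?thesis using wstar_opt by simp
  qed
  define l0 where "l0 = lam0 R'"
  define lh where "lh = lamhat R'"
  define g where "g = ghat R'"
  note repR = bspec[OF rep R'Regs]
  note maxR = bspec[OF maxim R'Regs]
  have l0R: "l0 \<in> R'" using repR unfolding l0_def by (rule conjunct1)
  have sgR: "\<forall>i<n. sigma R' i \<in> {-1, 1} \<and>
                  (sigma R' i = 1 \<longrightarrow> (\<forall>lam\<in>R'. ?r lam i \<ge> 0)) \<and>
                  (sigma R' i = -1 \<longrightarrow> (\<forall>lam\<in>R'. ?r lam i \<le> 0))" using repR by (rule conjunct2)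
  have gf: "gfeas X y n d R' (sigma R') g lh" using maxR unfolding g_def lh_def by (rule conjunct1)
  have gmax: "\<And>g' lam. gfeas X y n d R' (sigma R') g' lam \<Longrightarrow>
                  gobj X y n d M delta l0 g' \<le> gobj X y n d M delta l0 g"
    using maxR unfolding g_def l0_def by blast
  have lhR: "lh \<in> R'" using gf unfolding gfeas_def by blast
  have gX: "\<forall>j<d. (\<Sum>i<n. X i j * g i) = 0" using gf unfolding gfeas_def by blast
  have SGi: "SG (g i) (?r l0 i) (?r lh i)" if "i < n" for i
  proof -
    have gi: "(sigma R' i = 1 \<longrightarrow> 0 \<le> g i \<and> g i \<le> ?r lh i) \<and>
            (sigma R' i = -1 \<longrightarrow> ?r lh i \<le> g i \<and> g i \<le> 0)" using gf that unfolding gfeas_def by blast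
    have "sigma R' i = 1 \<or> sigma R' i = -1" using sgR that by auto
    then show ?thesis
    proof
      assume "sigma R' i = 1"
      then show ?thesis using gi sgR l0R that unfolding SG_def by auto
    next
      assume "sigma R' i = -1"
      then show ?thesis using gi sgR l0R that unfolding SG_def by auto
    qed
  qed
  define u where "u = (\<lambda>i. div01 (g i) (?r lh i))"
  have u01: "0 \<le> u i \<and> u i \<le> 1" if "i < n" for i
    unfolding u_def using item_u_range[OF SGi[OF that]] .
  have urh: "u i * ?r lh i = g i" if "i < n" for i
    unfolding u_def using SGi[OF that] unfolding SG_def by (intro div01_props(3)) auto
  have Vhat_eq: "Vhat X y n d (ghat R') (lamhat R') = (\<Sum>i<n. u i)"
    unfolding Vhat_def u_def g_def lh_def ..
  have M2: "M^2 = (\<Sum>i<n. ((\<Sum>j<d. X i j * beta0 j) - y i)\<^sup>2)"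
    unfolding M_def by (simp add: sum_nonneg)
  have lsg: "(\<Sum>i<n. w i * (?r lam i)^2) \<le> M^2"
    if "\<forall>i<n. 0 \<le> w i \<and> w i \<le> 1" "\<forall>j<d. (\<Sum>i<n. X i j * (w i * ?r lam i)) = 0" for w lam
    unfolding M2 by (rule ls_bound[OF d_pos that])
  have lsu: "(\<Sum>i<n. u i * (?r lh i)^2) \<le> M^2"
  proof (rule lsg)
    show "\<forall>i<n. 0 \<le> u i \<and> u i \<le> 1" using u01 by blast
    show "\<forall>j<d. (\<Sum>i<n. X i j * (u i * ?r lh i)) = 0" using gX urh by simp
  qed
  have lsw: "(\<Sum>i<n. wstar i * (?r lamstar i)^2) \<le> M^2" using lsg[OF w01 orth] .
  show ?thesis
  proof (cases "M = 0")
    case True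
    have "wstar i \<le> u i" if i: "i < n" for i
    proof (cases "?r lamstar i = 0")
      case True
      then have "?r lh i = 0" using RF[OF lhR i] by blast
      then have "g i = 0" using SGi[OF i] unfolding SG_def by auto
      then have "u i = 1" unfolding u_def div01_def using \<open>?r lh i = 0\<close> by simp
      then show ?thesis using w01 i by simp
    next
      case False
      have "(\<Sum>i<n. wstar i * (?r lamstar i)^2) = 0"
      proof -
        have "0 \<le> (\<Sum>i<n. wstar i * (?r lamstar i)^2)" using w01 by (intro sum_nonneg) auto
        then show ?thesis using lsw \<open>M = 0\<close> by simp
      qed
      then have "wstar i * (?r lamstar i)^2 = 0"
        using sum_nonneg_eq_0_iff[of "{..<n}" "\<lambda>i. wstar i * (?r lamstar i)^2"] w01 i by auto
      then have "wstar i = 0" using False by simp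
      then show ?thesis using u01[OF i] by simp
    qed
    then have "V \<le> (\<Sum>i<n. u i)" unfolding V_eq by (intro sum_mono) auto
    moreover have "0 \<le> eps * real n" using eps_pos by simp
    ultimately show ?thesis using R'Regs Vhat_eq by (intro bexI[of _ R']) auto
  next
    case False
    have "M \<ge> 0" unfolding M_def by (simp add: sum_nonneg)
    then have Mpos: "M > 0" using False by linarith
    have taupos: "tau > 0" unfolding tau_def using Mpos delta_pos n_pos by simp
    define A where "A = {..<n} - (BM X y n d M l0 \<union> BdM X y n d M delta l0)"
    have A_iff: "i \<in> A \<longleftrightarrow> i < n \<and> tau \<le> \<bar>?r l0 i\<bar> \<and> \<bar>?r l0 i\<bar> \<le> M" for i
      unfolding A_def BM_def BdM_def tau_def by auto
    have Asub: "A \<subseteq> {..<n}" unfolding A_def by auto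
    have finA: "finite A" using Asub finite_subset by blast
    have cardA: "card A \<le> n" using card_mono[OF _ Asub] by simp
    define Bst where "Bst = {i. i < n \<and> \<bar>?r lamstar i\<bar> > M}"
    define Bsm where "Bsm = {i. i < n \<and> \<bar>?r lamstar i\<bar> \<le> tau}"
    define bad0 where "bad0 = {i \<in> {..<n} - (Bst \<union> Bsm). \<bar>\<bar>?r l0 i\<bar> / \<bar>?r lamstar i\<bar> - 1\<bar> > eps}"
    define badh where "badh = {i \<in> {..<n} - (Bst \<union> Bsm). \<bar>\<bar>?r lh i\<bar> / \<bar>?r lamstar i\<bar> - 1\<bar> > eps}"
    have cb0: "real (card bad0) \<le> eps * n"
      using bspec[OF stable, of l0] l0R R'sub unfolding bad0_def Bst_def Bsm_def tau_def by blast
    have cbh: "real (card badh) \<le> eps * n"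
      using bspec[OF stable, of lh] lhR R'sub unfolding badh_def Bst_def Bsm_def tau_def by blast
    have finb0: "finite bad0" unfolding bad0_def by simp
    have finbh: "finite badh" unfolding badh_def by simp
    define A3 where "A3 = {i\<in>A. \<bar>?r lamstar i\<bar> < tau}"
    define A4 where "A4 = {i\<in>A. \<bar>?r lamstar i\<bar> > M}"
    have A4sub: "A4 \<subseteq> A" and A3sub: "A3 \<subseteq> A" unfolding A4_def A3_def by auto
    define t where "t = (\<lambda>i. min (g i / ?r l0 i) 1)"
    define gs where "gs = (\<lambda>i. wstar i * ?r lamstar i)"
    have gobj_g: "gobj X y n d M delta l0 g = (\<Sum>i\<in>A. t i)" unfolding gobj_def A_def t_def ..
    have gobj_gs: "gobj X y n d M delta l0 gs = (\<Sum>i\<in>A. min (gs i / ?r l0 i) 1)"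
      unfolding gobj_def A_def ..
    have gsfeas: "gfeas X y n d R' (sigma R') gs lamstar"
      unfolding gfeas_def
    proof (intro conjI allI impI)
      show "lamstar \<in> R'" by (rule lsR')
      show "(\<Sum>i<n. X i j * gs i) = 0" if "j < d" for j using orth that unfolding gs_def by simp
      fix i assume i: "i < n"
      have w: "0 \<le> wstar i" "wstar i \<le> 1" using w01 i by auto
      {
        assume "sigma R' i = 1"
        then have "?r lamstar i \<ge> 0" using sgR i lsR' by auto
        then show "0 \<le> gs i" "gs i \<le> ?r lamstar i" unfolding gs_def using w
          by (auto simp: mult_left_le_one_le)
      }
      {
        assume "sigma R' i = -1"
        then have "?r lamstar i \<le> 0" using sgR i lsR' by auto
        then show "?r lamstar i \<le> gs i" "gs i \<le> 0" unfolding gs_def using w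
          mult_right_mono_neg[of "wstar i" 1 "?r lamstar i"]
          by (auto simp: mult_nonneg_nonpos)
      }
    qed
    have step3: "(\<Sum>i\<in>A. min (gs i / ?r l0 i) 1) \<le> (\<Sum>i\<in>A. t i)"
      using gmax[OF gsfeas] unfolding gobj_g gobj_gs .
    have r0ne: "?r l0 i \<noteq> 0" if "i \<in> A" for i using A_iff[of i] that taupos by auto
    have An: "i < n" if "i \<in> A" for i using A_iff[of i] that by auto
    have notbad: "\<bar>\<bar>?r mu i\<bar> / \<bar>?r lamstar i\<bar> - 1\<bar> \<le> eps"
      if "i < n" "tau < \<bar>?r lamstar i\<bar>" "\<bar>?r lamstar i\<bar> \<le> M"
        "i \<notin> {i \<in> {..<n} - (Bst \<union> Bsm). \<bar>\<bar>?r mu i\<bar> / \<bar>?r lamstar i\<bar> - 1\<bar> > eps}" for i mu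
      using that unfolding Bst_def Bsm_def by auto
    have item2: "t i \<le> u i + 2 * eps + (if i \<in> bad0 then 1 else 0) + (if i \<in> badh then 1 else 0)
                  + (if i \<in> A4 then t i else 0)" if iA: "i \<in> A" for i
    proof -
      have i: "i < n" using An[OF iA] .
      have SG': "SG (g i) (?r l0 i) (?r lh i)" using SGi[OF i] .
      have t01: "0 \<le> t i" "t i \<le> 1" using item_t_range[OF SG'] unfolding t_def by auto
      have u0: "0 \<le> u i" using u01[OF i] by simp
      have e0: "0 \<le> eps" using eps_pos by simp
      have l0b: "tau \<le> \<bar>?r l0 i\<bar>" "\<bar>?r l0 i\<bar> \<le> M" using A_iff[of i] iA by auto
      consider "\<bar>?r lamstar i\<bar> > M" | "\<bar>?r lamstar i\<bar> < tau" | "\<bar>?r lamstar i\<bar> = tau"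
        | "tau < \<bar>?r lamstar i\<bar>" "\<bar>?r lamstar i\<bar> \<le> M" by linarith
      then show ?thesis
      proof cases
        case 1
        then have "i \<in> A4" unfolding A4_def using iA by auto
        then show ?thesis using u0 e0 by simp
      next
        case 2
        then have "\<bar>?r lh i\<bar> \<le> tau" using RF[OF lhR i] by blast
        then have "t i \<le> u i" unfolding t_def u_def using item_u_le[OF SG' r0ne[OF iA]] l0b by simp
        then show ?thesis using t01 e0 by simp
      next
        case 3
        then have "?r lh i = ?r lamstar i" "?r l0 i = ?r lamstar i" using RF[OF lhR i] RF[OF l0R i] by auto
        then have "t i \<le> u i" unfolding t_def u_def using item_u_le[OF SG' r0ne[OF iA]] by simp
        then show ?thesis using t01 e0 by simp
      next
        case 4
        show ?thesis
        proof (cases "i \<in> bad0 \<or> i \<in> badh")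
          case True
          then show ?thesis using t01 u0 e0 by auto
        next
          case False
          have c0: "\<bar>?r lamstar i\<bar> > 0" using 4 taupos by linarith
          have nb0: "\<bar>\<bar>?r l0 i\<bar> / \<bar>?r lamstar i\<bar> - 1\<bar> \<le> eps"
            using notbad[OF i 4, of l0] False unfolding bad0_def by blast
          have nbh: "\<bar>\<bar>?r lh i\<bar> / \<bar>?r lamstar i\<bar> - 1\<bar> \<le> eps"
            using notbad[OF i 4, of lh] False unfolding badh_def by blast
          have "t i - 2 * eps \<le> u i" unfolding t_def u_def
            using item_u_good[OF SG' r0ne[OF iA] c0 nbh nb0 e0] .
          then show ?thesis using False t01 by simp
        qed
      qed
    qed
    have sum_ind: "(\<Sum>i\<in>A. (if i \<in> B then 1 else 0)) = real (card (A \<inter> B))" for B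
      using sum.inter_restrict[OF finA, of "\<lambda>_. (1::real)" B] by simp
    have sum2: "(\<Sum>i\<in>A. t i) \<le> (\<Sum>i\<in>A. u i) + 2 * eps * real (card A) + real (card (A \<inter> bad0))
        + real (card (A \<inter> badh)) + (\<Sum>i\<in>A4. t i)"
    proof -
      have "(\<Sum>i\<in>A. t i) \<le> (\<Sum>i\<in>A. u i + 2 * eps + (if i \<in> bad0 then 1 else 0) + (if i \<in> badh then 1 else 0)
                  + (if i \<in> A4 then t i else 0))" by (rule sum_mono) (rule item2)
      also have "\<dots> = (\<Sum>i\<in>A. u i) + 2 * eps * real (card A) + (\<Sum>i\<in>A. (if i \<in> bad0 then 1 else 0))
          + (\<Sum>i\<in>A. (if i \<in> badh then 1 else 0)) + (\<Sum>i\<in>A. (if i \<in> A4 then t i else 0))"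
        by (simp add: sum.distrib)
      also have "(\<Sum>i\<in>A. (if i \<in> A4 then t i else 0)) = (\<Sum>i\<in>A4. t i)"
        using sum.inter_restrict[OF finA, of t A4] A4sub by (simp add: Int_absorb1)
      finally show ?thesis unfolding sum_ind .
    qed
    have sumu: "(\<Sum>i\<in>A. u i) \<le> (\<Sum>i<n. u i)"
      using u01 Asub by (intro sum_mono2) auto
    have cA0: "real (card (A \<inter> bad0)) \<le> eps * n"
    proof -
      have "card (A \<inter> bad0) \<le> card bad0" using card_mono[OF finb0, of "A \<inter> bad0"] by auto
      then show ?thesis using cb0 by linarith
    qed
    have cAh: "real (card (A \<inter> badh)) \<le> eps * n"
    proof -
      have "card (A \<inter> badh) \<le> card badh" using card_mono[OF finbh, of "A \<inter> badh"] by auto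
      then show ?thesis using cbh by linarith
    qed
    have epsA: "2 * eps * real (card A) \<le> 2 * eps * n" using cardA eps_pos by simp
    have A4t: "(\<Sum>i\<in>A4. t i) \<le> 1"
    proof -
      have "(\<Sum>i\<in>A4. t i * M^2) \<le> (\<Sum>i\<in>A4. u i * (?r lh i)^2)"
      proof (rule sum_mono)
        fix i assume iA4: "i \<in> A4"
        then have iA: "i \<in> A" and big: "\<bar>?r lamstar i\<bar> > M" unfolding A4_def by auto
        have i: "i < n" using An[OF iA] .
        have "\<bar>?r l0 i\<bar> \<ge> M" "\<bar>?r lh i\<bar> \<ge> M" using RF[OF l0R i] RF[OF lhR i] big by auto
        moreover have "\<bar>?r l0 i\<bar> \<le> M" using A_iff[of i] iA by auto
        ultimately show "t i * M^2 \<le> u i * (?r lh i)^2" unfolding t_def u_def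
          using item_A4[OF SGi[OF i] _ _ Mpos] by simp
      qed
      also have "\<dots> \<le> (\<Sum>i<n. u i * (?r lh i)^2)"
        using u01 A4sub Asub by (intro sum_mono2) auto
      also have "\<dots> \<le> M^2" by (rule lsu)
      finally have "(\<Sum>i\<in>A4. t i) * M^2 \<le> 1 * M^2" by (simp add: sum_distrib_right)
      then show ?thesis using Mpos by (simp add: mult_le_cancel_right)
    qed
    have item4: "wstar i - eps - (if i \<in> bad0 then 1 else 0) - (if i \<in> A3 then 1 - \<bar>?r lamstar i\<bar> / tau else 0)
        - (if i \<in> A4 then wstar i else 0) \<le> min (gs i / ?r l0 i) 1" if iA: "i \<in> A" for i
    proof -
      have i: "i < n" using An[OF iA] .
      have w: "0 \<le> wstar i" "wstar i \<le> 1" using w01 i by auto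
      have e0: "0 \<le> eps" using eps_pos by simp
      have l0b: "tau \<le> \<bar>?r l0 i\<bar>" "\<bar>?r l0 i\<bar> \<le> M" using A_iff[of i] iA by auto
      have RFi: "(?r lamstar i = 0 \<longrightarrow> ?r l0 i = 0) \<and> (?r lamstar i > 0 \<longrightarrow> ?r l0 i \<ge> 0) \<and>
          (?r lamstar i < 0 \<longrightarrow> ?r l0 i \<le> 0)" using RF[OF l0R i] by blast
      have sgn: "?r lamstar i * ?r l0 i > 0"
      proof -
        have "?r l0 i \<noteq> 0" using r0ne[OF iA] .
        then show ?thesis using RFi
          by (cases "?r lamstar i > 0"; cases "?r lamstar i < 0") (auto simp: zero_less_mult_iff)
      qed
      have nn: "0 \<le> min (gs i / ?r l0 i) 1" unfolding gs_def
        using item_w_nonneg[OF w(1), of "?r lamstar i" "?r l0 i"] sgn by simp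
      have tM: "tau \<le> M" using l0b by linarith
      consider "\<bar>?r lamstar i\<bar> > M" | "\<bar>?r lamstar i\<bar> < tau" | "\<bar>?r lamstar i\<bar> = tau"
        | "tau < \<bar>?r lamstar i\<bar>" "\<bar>?r lamstar i\<bar> \<le> M" by linarith
      then show ?thesis
      proof cases
        case 1
        then have "i \<in> A4" "i \<notin> A3" unfolding A4_def A3_def using iA tM by auto
        then show ?thesis using nn e0 by simp
      next
        case 2
        then have "i \<in> A3" "i \<notin> A4" unfolding A4_def A3_def using iA tM by auto
        moreover have "\<bar>?r l0 i\<bar> = tau" using RF[OF l0R i] 2 l0b by auto
        ultimately show ?thesis unfolding gs_def
          using item_w_A3[OF w sgn _ ] 2 e0 by simp
      next
        case 3
        then have "i \<notin> A3" "i \<notin> A4" unfolding A4_def A3_def using tM by auto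
        moreover have "?r l0 i = ?r lamstar i" using RF[OF l0R i] 3 by auto
        moreover have "?r lamstar i \<noteq> 0" using 3 taupos by auto
        ultimately show ?thesis unfolding gs_def using w e0 by simp
      next
        case 4
        then have n34: "i \<notin> A3" "i \<notin> A4" unfolding A4_def A3_def by auto
        show ?thesis
        proof (cases "i \<in> bad0")
          case True
          then show ?thesis using nn w n34 e0 by simp
        next
          case False
          have nb0: "\<bar>\<bar>?r l0 i\<bar> / \<bar>?r lamstar i\<bar> - 1\<bar> \<le> eps"
            using notbad[OF i 4, of l0] False unfolding bad0_def by blast
          show ?thesis unfolding gs_def using item_w_good[OF w sgn nb0 e0] n34 False by simp
        qed
      qed
    qed
    have sum4: "(\<Sum>i\<in>A. wstar i) - eps * real (card A) - real (card (A \<inter> bad0))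
        - (\<Sum>i\<in>A3. 1 - \<bar>?r lamstar i\<bar> / tau) - (\<Sum>i\<in>A4. wstar i)
        \<le> (\<Sum>i\<in>A. min (gs i / ?r l0 i) 1)"
    proof -
      have "(\<Sum>i\<in>A. wstar i - eps - (if i \<in> bad0 then 1 else 0) - (if i \<in> A3 then 1 - \<bar>?r lamstar i\<bar> / tau else 0)
        - (if i \<in> A4 then wstar i else 0)) \<le> (\<Sum>i\<in>A. min (gs i / ?r l0 i) 1)"
        by (rule sum_mono) (rule item4)
      moreover have "(\<Sum>i\<in>A. wstar i - eps - (if i \<in> bad0 then 1 else 0) - (if i \<in> A3 then 1 - \<bar>?r lamstar i\<bar> / tau else 0)
        - (if i \<in> A4 then wstar i else 0)) = (\<Sum>i\<in>A. wstar i) - eps * real (card A) - (\<Sum>i\<in>A. (if i \<in> bad0 then 1 else 0))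
        - (\<Sum>i\<in>A. (if i \<in> A3 then 1 - \<bar>?r lamstar i\<bar> / tau else 0)) - (\<Sum>i\<in>A. (if i \<in> A4 then wstar i else 0))"
        by (simp add: sum_subtractf)
      moreover have "(\<Sum>i\<in>A. (if i \<in> A4 then wstar i else 0)) = (\<Sum>i\<in>A4. wstar i)"
        using sum.inter_restrict[OF finA, of wstar A4] A4sub by (simp add: Int_absorb1)
      moreover have "(\<Sum>i\<in>A. (if i \<in> A3 then 1 - \<bar>?r lamstar i\<bar> / tau else 0)) = (\<Sum>i\<in>A3. 1 - \<bar>?r lamstar i\<bar> / tau)"
        using sum.inter_restrict[OF finA, of "\<lambda>i. 1 - \<bar>?r lamstar i\<bar> / tau" A3] A3sub by (simp add: Int_absorb1)
      ultimately show ?thesis unfolding sum_ind by simp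
    qed
    have BM0sub: "BM X y n d M l0 \<subseteq> Bst"
    proof
      fix i assume "i \<in> BM X y n d M l0"
      then have i: "i < n" and b: "\<bar>?r l0 i\<bar> > M" unfolding BM_def by auto
      have "\<bar>?r lamstar i\<bar> > M"
      proof (rule ccontr)
        assume "\<not> \<bar>?r lamstar i\<bar> > M"
        then have "\<bar>?r l0 i\<bar> \<le> M" using RF[OF l0R i] by auto
        then show False using b by simp
      qed
      then show "i \<in> Bst" unfolding Bst_def using i by simp
    qed
    define BD where "BD = BdM X y n d M delta l0"
    have BDsub: "BD \<subseteq> {..<n}" unfolding BD_def BdM_def by auto
    have Bstsub: "Bst \<subseteq> {..<n}" unfolding Bst_def by auto
    have finBD: "finite BD" using BDsub finite_subset by blast
    have finBst: "finite Bst" using Bstsub finite_subset by blast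
    have cover: "{..<n} \<subseteq> A \<union> (BD \<union> (Bst - A))"
      using BM0sub unfolding A_def BD_def by auto
    have wnn: "0 \<le> wstar i" if "i \<in> A \<union> (BD \<union> (Bst - A))" for i
      using that Asub BDsub Bstsub w01 by auto
    have s5: "(\<Sum>i<n. wstar i) \<le> (\<Sum>i\<in>A. wstar i) + (\<Sum>i\<in>BD. wstar i) + (\<Sum>i\<in>Bst - A. wstar i)"
    proof -
      have "(\<Sum>i<n. wstar i) \<le> (\<Sum>i\<in>A \<union> (BD \<union> (Bst - A)). wstar i)"
        using cover wnn finA finBD finBst by (intro sum_mono2) auto
      also have "\<dots> \<le> (\<Sum>i\<in>A. wstar i) + (\<Sum>i\<in>BD \<union> (Bst - A). wstar i)"
        using wnn finA finBD finBst by (intro sum_Un_le_nonneg) auto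
      also have "(\<Sum>i\<in>BD \<union> (Bst - A). wstar i) \<le> (\<Sum>i\<in>BD. wstar i) + (\<Sum>i\<in>Bst - A. wstar i)"
        using wnn finBD finBst by (intro sum_Un_le_nonneg) auto
      finally show ?thesis by simp
    qed
    have bd: "(\<Sum>i\<in>BD. wstar i) \<le> eps * n"
    proof -
      have "(\<Sum>i\<in>BD. wstar i) \<le> (\<Sum>i\<in>BD. 1)" using w01 BDsub by (intro sum_mono) auto
      also have "\<dots> = real (card BD)" by simp
      also have "\<dots> \<le> eps * n" using bspec[OF H0 R'Regs] unfolding BD_def l0_def .
      finally show ?thesis .
    qed
    have bst: "(\<Sum>i\<in>Bst. wstar i) \<le> 1"
    proof -
      have "(\<Sum>i\<in>Bst. wstar i * M^2) \<le> (\<Sum>i\<in>Bst. wstar i * (?r lamstar i)^2)"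
      proof (rule sum_mono)
        fix i assume "i \<in> Bst"
        then have i: "i < n" and b: "\<bar>?r lamstar i\<bar> > M" unfolding Bst_def by auto
        have "M^2 \<le> (?r lamstar i)^2" using b Mpos
          by (metis abs_ge_zero less_imp_le power2_abs power_mono)
        then show "wstar i * M^2 \<le> wstar i * (?r lamstar i)^2" using w01 i by (intro mult_left_mono) auto
      qed
      also have "\<dots> \<le> (\<Sum>i<n. wstar i * (?r lamstar i)^2)"
        using w01 Bstsub by (intro sum_mono2) auto
      also have "\<dots> \<le> M^2" by (rule lsw)
      finally have "(\<Sum>i\<in>Bst. wstar i) * M^2 \<le> 1 * M^2" by (simp add: sum_distrib_right)
      then show ?thesis using Mpos by (simp add: mult_le_cancel_right)
    qed
    have splitB: "(\<Sum>i\<in>Bst. wstar i) = (\<Sum>i\<in>Bst - A. wstar i) + (\<Sum>i\<in>A4. wstar i)"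
    proof -
      have "Bst = (Bst - A) \<union> A4" unfolding A4_def Bst_def using Asub by auto
      moreover have "(Bst - A) \<inter> A4 = {}" unfolding A4_def by auto
      ultimately show ?thesis using finBst finA A4sub
        by (metis finite_Diff finite_subset sum.union_disjoint)
    qed
    have zeros: "\<forall>i<n. (i, 0::real) \<in> E" using Einc by blast
    have A3n: "A3 \<subseteq> {..<n}" using A3sub Asub by auto
    have s6: "(\<Sum>i\<in>A3. 1 - \<bar>?r lamstar i\<bar> / tau) \<le> eps * n"
    proof -
      obtain mu where mu: "mu \<in> region X y d E (pat X y d lamstar)"
        "\<forall>nu \<in> region X y d E (pat X y d mu). \<forall>i<n. ?r nu i = ?r mu i"
        "(\<Sum>i\<in>A3. \<bar>?r mu i\<bar>) \<le> (\<Sum>i\<in>A3. \<bar>?r lamstar i\<bar>)"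
        using descent[OF finE zeros A3n lsv, of X y] by blast
      have muR: "mu \<in> R'" using mu(1) unfolding R'_def .
      have muv: "mu \<in> vecs (d - 1)" using muR R'vecs by blast
      define Rm where "Rm = region X y d E (pat X y d mu)"
      have RmRegs: "Rm \<in> Regs" unfolding Rm_def Regs_def using pat_in_regions[OF muv] .
      have l0m: "lam0 Rm \<in> Rm" using bspec[OF rep RmRegs] by (rule conjunct1)
      have rl0m: "?r (lam0 Rm) i = ?r mu i" if "i < n" for i using mu(2) l0m that unfolding Rm_def by blast
      have finA3: "finite A3" using A3n finite_subset by blast
      have "{i\<in>A3. \<bar>?r mu i\<bar> < tau} \<subseteq> BdM X y n d M delta (lam0 Rm)"
        unfolding BdM_def using rl0m A3n tau_def by auto
      moreover have "finite (BdM X y n d M delta (lam0 Rm))" unfolding BdM_def by simp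
      ultimately have "card {i\<in>A3. \<bar>?r mu i\<bar> < tau} \<le> card (BdM X y n d M delta (lam0 Rm))"
        by (intro card_mono)
      then have "real (card {i\<in>A3. \<bar>?r mu i\<bar> < tau}) \<le> real (card (BdM X y n d M delta (lam0 Rm)))"
        by simp
      then have cardm: "real (card {i\<in>A3. \<bar>?r mu i\<bar> < tau}) \<le> eps * n"
        using bspec[OF H0 RmRegs] by linarith
      have "(\<Sum>i\<in>A3. 1 - \<bar>?r lamstar i\<bar> / tau) = real (card A3) - (\<Sum>i\<in>A3. \<bar>?r lamstar i\<bar>) / tau"
        by (simp add: sum_subtractf sum_divide_distrib)
      also have "\<dots> \<le> real (card A3) - (\<Sum>i\<in>A3. \<bar>?r mu i\<bar>) / tau"
        using mu(3) taupos by (simp add: divide_right_mono)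
      also have "\<dots> = (\<Sum>i\<in>A3. 1 - \<bar>?r mu i\<bar> / tau)"
        by (simp add: sum_subtractf sum_divide_distrib)
      also have "\<dots> \<le> (\<Sum>i\<in>A3. (if i \<in> {i\<in>A3. \<bar>?r mu i\<bar> < tau} then 1 else 0))"
      proof (rule sum_mono)
        fix i assume iA3: "i \<in> A3"
        then have i: "i < n" and s: "\<bar>?r lamstar i\<bar> < tau" using A3n unfolding A3_def by auto
        have le: "\<bar>?r mu i\<bar> \<le> tau" using RF[OF muR i] s by blast
        show "1 - \<bar>?r mu i\<bar> / tau \<le> (if i \<in> {i\<in>A3. \<bar>?r mu i\<bar> < tau} then 1 else 0)"
        proof (cases "\<bar>?r mu i\<bar> < tau")
          case True then show ?thesis using iA3 taupos by simp
        next
          case False then have "\<bar>?r mu i\<bar> = tau" using le by simp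
          then show ?thesis using taupos by simp
        qed
      qed
      also have "\<dots> = real (card {i\<in>A3. \<bar>?r mu i\<bar> < tau})"
        using sum.inter_restrict[OF finA3, of "\<lambda>_. (1::real)" "{i\<in>A3. \<bar>?r mu i\<bar> < tau}"]
        by (simp add: Int_absorb1)
      finally show ?thesis using cardm by simp
    qed
    have A4e: "A4 = {}" if small: "eps * n < 1"
    proof (rule ccontr)
      assume "A4 \<noteq> {}"
      then obtain i where iA4: "i \<in> A4" by blast
      then have iA: "i \<in> A" and big: "\<bar>?r lamstar i\<bar> > M" unfolding A4_def by auto
      have i: "i < n" using An[OF iA] .
      have r0M: "\<bar>?r l0 i\<bar> = M" using RF[OF l0R i] big A_iff[of i] iA by force
      have dne: "?r lamstar i - ?r l0 i \<noteq> 0" using r0M big by auto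
      define tt where "tt = ?r lamstar i / (?r lamstar i - ?r l0 i)"
      define nu where "nu = (\<lambda>j. lamstar j + tt * (l0 j - lamstar j))"
      have l0v: "l0 \<in> vecs (d - 1)" using l0R R'vecs by blast
      have nuv: "nu \<in> vecs (d - 1)" unfolding nu_def using vecs_affine[OF lsv l0v] .
      have rnu: "?r nu i = 0" unfolding nu_def resid_affine tt_def using dne
        by (simp add: field_simps)
      obtain mu where mu: "mu \<in> region X y d E (pat X y d nu)"
        "\<forall>nu' \<in> region X y d E (pat X y d mu). \<forall>i<n. ?r nu' i = ?r mu i"
        using descent[OF finE zeros _ nuv, of "{}" X y] by auto
      have rmu: "?r mu i = 0" using mu(1) rnu zeros i unfolding in_region_pat by fastforce
      have muv: "mu \<in> vecs (d - 1)" using mu(1) region_sub_vecs by blast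
      define Rm where "Rm = region X y d E (pat X y d mu)"
      have RmRegs: "Rm \<in> Regs" unfolding Rm_def Regs_def using pat_in_regions[OF muv] .
      have l0m: "lam0 Rm \<in> Rm" using bspec[OF rep RmRegs] by (rule conjunct1)
      have "?r (lam0 Rm) i = 0" using mu(2) l0m i rmu unfolding Rm_def by force
      then have "i \<in> BdM X y n d M delta (lam0 Rm)" unfolding BdM_def using i taupos tau_def by auto
      moreover have "finite (BdM X y n d M delta (lam0 Rm))" unfolding BdM_def by simp
      ultimately have "card (BdM X y n d M delta (lam0 Rm)) \<ge> 1"
        by (metis card_0_eq empty_iff less_one not_le)
      then have "real (card (BdM X y n d M delta (lam0 Rm))) \<ge> 1" by simp
      then show False using bspec[OF H0 RmRegs] small by linarith
    qed
    have A4t': "(\<Sum>i\<in>A4. t i) \<le> 4 * eps * n"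
    proof (cases "eps * n < 1")
      case True then show ?thesis using A4e eps_pos by simp
    next
      case False then show ?thesis using A4t by linarith
    qed
    have cardAe: "eps * real (card A) \<le> eps * n" using cardA eps_pos by simp
    have "V - 12 * eps * real n - 1 \<le> (\<Sum>i<n. u i)"
      using sum2 sumu cA0 cAh epsA A4t' step3 sum4 cardAe s5 bd bst splitB s6 V_eq by linarith
    then show ?thesis using R'Regs Vhat_eq by (intro bexI[of _ R']) auto




  qed
qed

theorem lemma5:
  fixes X :: "nat \<Rightarrow> nat \<Rightarrow> real" and y :: "nat \<Rightarrow> real" and n d :: nat
    and beta0 :: "nat \<Rightarrow> real" and eps delta :: real and S :: "nat set"
    and wstar lamstar :: "nat \<Rightarrow> real" and Rstar :: "(nat \<Rightarrow> real) set"
    and lam0 :: "(nat \<Rightarrow> real) set \<Rightarrow> nat \<Rightarrow> real"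
    and sigma :: "(nat \<Rightarrow> real) set \<Rightarrow> nat \<Rightarrow> real"
    and ghat lamhat :: "(nat \<Rightarrow> real) set \<Rightarrow> nat \<Rightarrow> real"
    and M V :: real and E :: "(nat \<times> real) set" and Regs :: "(nat \<Rightarrow> real) set set"
  assumes n_pos: "1 \<le> n" and d_pos: "1 \<le> d"
    and beta0_min: "\<forall>beta. (\<Sum>i<n. ((\<Sum>j<d. X i j * beta0 j) - y i)\<^sup>2)
                          \<le> (\<Sum>i<n. ((\<Sum>j<d. X i j * beta j) - y i)\<^sup>2)"
    and M_def: "M = sqrt (\<Sum>i<n. ((\<Sum>j<d. X i j * beta0 j) - y i)\<^sup>2)"
    and V_def: "V = Vval X y n d"
    and eps_pos: "eps > 0" and delta_pos: "delta > 0" and S_sub: "S \<subseteq> {..<n}"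
    and E_def: "E = eqns n M eps delta S"
    and Regs_def: "Regs = regions X y d E"
    and rep: "\<forall>R\<in>Regs. lam0 R \<in> R \<and>
               (\<forall>i<n. sigma R i \<in> {-1, 1} \<and>
                  (sigma R i = 1 \<longrightarrow> (\<forall>lam\<in>R. resid X y d lam i \<ge> 0)) \<and>
                  (sigma R i = -1 \<longrightarrow> (\<forall>lam\<in>R. resid X y d lam i \<le> 0)))"
    and maxim: "\<forall>R\<in>Regs. gfeas X y n d R (sigma R) (ghat R) (lamhat R) \<and>
               (\<forall>g lam. gfeas X y n d R (sigma R) g lam \<longrightarrow>
                  gobj X y n d M delta (lam0 R) g \<le> gobj X y n d M delta (lam0 R) (ghat R))"
    and wstar_feas: "feasV X y n d wstar lamstar"
    and wstar_opt: "(\<Sum>i<n. \<bar>wstar i\<bar>) = V"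
    and Rstar: "Rstar \<in> Regs" "lamstar \<in> Rstar"
    and stable: "\<forall>lam\<in>Rstar.
        real (card {i \<in> {..<n} - ({i. i < n \<and> \<bar>resid X y d lamstar i\<bar> > M}
                                  \<union> {i. i < n \<and> \<bar>resid X y d lamstar i\<bar> \<le> delta * M / sqrt n}).
                 \<bar>\<bar>resid X y d lam i\<bar> / \<bar>resid X y d lamstar i\<bar> - 1\<bar> > eps})
        \<le> eps * real n"
  shows "real (Max ((\<lambda>R. card (BdM X y n d M delta (lam0 R))) ` Regs)) > eps * real n
         \<or> (V - 12 * eps * real n - 1 \<le> Max ((\<lambda>R. Vhat X y n d (ghat R) (lamhat R)) ` Regs)
            \<and> Max ((\<lambda>R. Vhat X y n d (ghat R) (lamhat R)) ` Regs) \<le> V)"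
proof -
  have finE: "finite E" using E_def finite_eqns[OF S_sub] by simp
  have finRegs: "finite Regs" using Regs_def finite_regions[OF finE] by simp
  have RegsNE: "Regs \<noteq> {}" using Rstar by blast
  have bdd: "bdd_above {(\<Sum>i<n. \<bar>w i\<bar>) | w lam. feasV X y n d w lam}"
  proof (rule bdd_aboveI)
    fix x assume "x \<in> {(\<Sum>i<n. \<bar>w i\<bar>) | w lam. feasV X y n d w lam}"
    then obtain w lam where x: "x = (\<Sum>i<n. \<bar>w i\<bar>)" and f: "feasV X y n d w lam" by blast
    have "(\<Sum>i<n. \<bar>w i\<bar>) \<le> (\<Sum>i<n. (1::real))" using f unfolding feasV_def by (intro sum_mono) auto
    then show "x \<le> real n" using x by simp
  qed
  have feasle: "(\<Sum>i<n. \<bar>w i\<bar>) \<le> V" if "feasV X y n d w lam" for w lam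
    unfolding V_def Vval_def using that bdd by (intro cSup_upper) auto
  have up1: "Vhat X y n d (ghat R) (lamhat R) \<le> V" if R: "R \<in> Regs" for R
  proof -
    have gf: "gfeas X y n d R (sigma R) (ghat R) (lamhat R)" using bspec[OF maxim R] by (rule conjunct1)
    have sgR: "\<forall>i<n. sigma R i \<in> {-1, 1}" using bspec[OF rep R] by blast
    have box: "(0 \<le> ghat R i \<and> ghat R i \<le> resid X y d (lamhat R) i) \<or>
        (resid X y d (lamhat R) i \<le> ghat R i \<and> ghat R i \<le> 0)" if i: "i < n" for i
    proof -
      have "sigma R i = 1 \<or> sigma R i = -1" using sgR i by auto
      then show ?thesis using gf i unfolding gfeas_def by auto
    qed
    define u where "u = (\<lambda>i. div01 (ghat R i) (resid X y d (lamhat R) i))"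
    have u01: "0 \<le> u i \<and> u i \<le> 1" if "i < n" for i
      unfolding u_def using div01_props(1,2)[OF box[OF that]] by simp
    have urh: "u i * resid X y d (lamhat R) i = ghat R i" if "i < n" for i
      unfolding u_def using div01_props(3)[OF box[OF that]] .
    obtain s where s: "R = region X y d E s" using R unfolding Regs_def regions_def by auto
    have lhv: "lamhat R \<in> vecs (d - 1)" using gf region_sub_vecs s unfolding gfeas_def by blast
    have "feasV X y n d u (lamhat R)"
      unfolding feasV_def using u01 lhv gf urh unfolding gfeas_def by auto
    then have "(\<Sum>i<n. \<bar>u i\<bar>) \<le> V" by (rule feasle)
    moreover have "(\<Sum>i<n. \<bar>u i\<bar>) = (\<Sum>i<n. u i)" using u01 by (intro sum.cong) auto
    ultimately show ?thesis unfolding Vhat_def u_def by simp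
  qed
  have up: "Max ((\<lambda>R. Vhat X y n d (ghat R) (lamhat R)) ` Regs) \<le> V"
    using finRegs RegsNE up1 by (subst Max_le_iff) auto
  show ?thesis
  proof (cases "real (Max ((\<lambda>R. card (BdM X y n d M delta (lam0 R))) ` Regs)) > eps * real n")
    case True then show ?thesis by simp
  next
    case False
    have H0: "\<forall>R\<in>Regs. real (card (BdM X y n d M delta (lam0 R))) \<le> eps * real n"
    proof
      fix R assume R: "R \<in> Regs"
      have "card (BdM X y n d M delta (lam0 R)) \<le> Max ((\<lambda>R. card (BdM X y n d M delta (lam0 R))) ` Regs)"
        using finRegs R by (intro Max_ge) auto
      then have "real (card (BdM X y n d M delta (lam0 R))) \<le> real (Max ((\<lambda>R. card (BdM X y n d M delta (lam0 R))) ` Regs))"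
        by simp
      then show "real (card (BdM X y n d M delta (lam0 R))) \<le> eps * real n" using False by linarith
    qed
    obtain R where R: "R \<in> Regs" and lowR: "V - 12 * eps * real n - 1 \<le> Vhat X y n d (ghat R) (lamhat R)"
      using lower_bound[OF n_pos d_pos M_def eps_pos delta_pos S_sub E_def Regs_def rep maxim wstar_feas wstar_opt Rstar stable H0]
      by blast
    have "Vhat X y n d (ghat R) (lamhat R) \<le> Max ((\<lambda>R. Vhat X y n d (ghat R) (lamhat R)) ` Regs)"
      using finRegs R by (intro Max_ge) auto
    then show ?thesis using lowR up by simp
  qed
qed

end
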